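(* There is no deal and legal game that is a tranca mínima (as defined in the context) in which the winning team obtains $108$ points.
   Context: Domino tiles: the set of tiles consists of the 28 unordered pairs $[a,b]=[b,a]$ with $a,b\in\{0,1,\dots,6\}$; the number of points (pips) of $[a,b]$ is $a+b$. Four players, numbered 1 to 4, play; players 1 and 3 form one team and players 2 and 4 the other. The 28 tiles are dealt, 7 to each player (the initial hands). Players take turns in cyclic order $1,2,3,4,1,\dots$. The starting player places any one of their tiles on the table, forming a line of tiles (the board) with two open ends. On each subsequent turn, the player whose turn it is must, if they hold a tile containing a number equal to the number shown at one of the two open ends, place such a tile at that end (with equal numbers adjacent), the other number of the tile becoming the new open end; if they hold no such tile, they pass. A game ends either when a player places their last tile, or in a tranca (blocked game): a position in which no player holds a tile that can be placed. In a game ending in a tranca, the team whose two players' remaining tiles have the smaller total number of pips wins, and it obtains as points the total number of pips on the tiles remaining in the hands of the two players of the other (losing) team. A tranca mínima is a game ending in a tranca in which the total number of pips on the tiles of the board at the end of the game is $42$. *)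

theory Defs
  imports Main
begin

text \<open>A tile [a,b] is represented in normal form (a,b) with a \<le> b \<le> 6.
  Tiles lying on the board are oriented pairs (x,y): x is the number facing
  left, y the number facing right; adjacent tiles on the board have equal
  facing numbers.  Players are 1,2,3,4; teams are {1,3} and {2,4}.\<close>

type_synonym tile = "nat \<times> nat"
type_synonym hands = "nat \<Rightarrow> tile set"
type_synonym board = "(nat \<times> nat) list"
type_synonym state = "hands \<times> board"

definition all_tiles :: "tile set" where
  "all_tiles = {(a, b). a \<le> b \<and> b \<le> 6}"

definition players :: "nat set" where
  "players = {1, 2, 3, 4}"

definition pips :: "nat \<times> nat \<Rightarrow> nat" where
  "pips t = fst t + snd t"

definition is_deal :: "hands \<Rightarrow> bool" where
  "is_deal H \<longleftrightarrow>
     (\<forall>p\<in>players. H p \<subseteq> all_tiles \<and> card (H p) = 7) \<and>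
     (\<forall>p\<in>players. \<forall>q\<in>players. p \<noteq> q \<longrightarrow> H p \<inter> H q = {}) \<and>
     (\<Union>p\<in>players. H p) = all_tiles"

definition left_end :: "board \<Rightarrow> nat" where
  "left_end B = fst (hd B)"

definition right_end :: "board \<Rightarrow> nat" where
  "right_end B = snd (last B)"

definition fits :: "tile \<Rightarrow> board \<Rightarrow> bool" where
  "fits t B \<longleftrightarrow> B \<noteq> [] \<and>
     (left_end B \<in> {fst t, snd t} \<or> right_end B \<in> {fst t, snd t})"

definition can_play :: "state \<Rightarrow> nat \<Rightarrow> bool" where
  "can_play s p \<longleftrightarrow> (\<exists>t\<in>fst s p. fits t (snd s))"

definition attach :: "tile \<Rightarrow> board \<Rightarrow> board \<Rightarrow> bool" where
  "attach t B B' \<longleftrightarrow>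
     (snd t = left_end B \<and> B' = t # B) \<or>
     (fst t = left_end B \<and> B' = (snd t, fst t) # B) \<or>
     (fst t = right_end B \<and> B' = B @ [t]) \<or>
     (snd t = right_end B \<and> B' = B @ [(snd t, fst t)])"

definition turn :: "nat \<Rightarrow> state \<Rightarrow> state \<Rightarrow> bool" where
  "turn p s s' \<longleftrightarrow>
     (let H = fst s; B = snd s in
      if B = [] then
        (\<exists>t\<in>H p. fst s' = H(p := H p - {t}) \<and>
                  (snd s' = [t] \<or> snd s' = [(snd t, fst t)]))
      else if can_play s p then
        (\<exists>t\<in>H p. fits t B \<and> fst s' = H(p := H p - {t}) \<and> attach t B (snd s'))
      else s' = s)"

text \<open>Player whose turn is the k-th turn (k = 0 is the opening move): 1,2,3,4,1,...\<close>
definition player_of_turn :: "nat \<Rightarrow> nat" where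
  "player_of_turn k = k mod 4 + 1"

definition blocked :: "state \<Rightarrow> bool" where
  "blocked s \<longleftrightarrow> (\<forall>p\<in>players. \<not> can_play s p)"

definition game_over :: "state \<Rightarrow> bool" where
  "game_over s \<longleftrightarrow> snd s \<noteq> [] \<and> ((\<exists>p\<in>players. fst s p = {}) \<or> blocked s)"

definition legal_game :: "state list \<Rightarrow> bool" where
  "legal_game ss \<longleftrightarrow> ss \<noteq> [] \<and>
     is_deal (fst (ss ! 0)) \<and> snd (ss ! 0) = [] \<and>
     (\<forall>k. Suc k < length ss \<longrightarrow> turn (player_of_turn k) (ss ! k) (ss ! Suc k)) \<and>
     (\<forall>k. Suc k < length ss \<longrightarrow> \<not> game_over (ss ! k)) \<and>
     game_over (last ss)"

definition ends_in_tranca :: "state list \<Rightarrow> bool" where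
  "ends_in_tranca ss \<longleftrightarrow> blocked (last ss) \<and> (\<forall>p\<in>players. fst (last ss) p \<noteq> {})"

definition hand_pips :: "state \<Rightarrow> nat \<Rightarrow> nat" where
  "hand_pips s p = (\<Sum>t\<in>fst s p. pips t)"

definition board_pips :: "state \<Rightarrow> nat" where
  "board_pips s = (\<Sum>t\<leftarrow>snd s. pips t)"

definition team13_pips :: "state \<Rightarrow> nat" where
  "team13_pips s = hand_pips s 1 + hand_pips s 3"

definition team24_pips :: "state \<Rightarrow> nat" where
  "team24_pips s = hand_pips s 2 + hand_pips s 4"

definition winner_obtains :: "state \<Rightarrow> nat \<Rightarrow> bool" where
  "winner_obtains s n \<longleftrightarrow>
     (team13_pips s < team24_pips s \<and> team24_pips s = n) \<or>
     (team24_pips s < team13_pips s \<and> team13_pips s = n)"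

definition tranca_minima :: "state list \<Rightarrow> bool" where
  "tranca_minima ss \<longleftrightarrow> legal_game ss \<and> ends_in_tranca ss \<and> board_pips (last ss) = 42"

end

theory Submission
  imports Defs
begin


definition vals :: "nat \<times> nat \<Rightarrow> nat set" where "vals t = {fst t, snd t}"
definition nrm :: "nat \<times> nat \<Rightarrow> nat \<times> nat" where
  "nrm t = (min (fst t) (snd t), max (fst t) (snd t))"

fun chain :: "(nat \<times> nat) list \<Rightarrow> bool" where
  "chain [] = True"
| "chain [x] = True"
| "chain (x # y # r) = (snd x = fst y \<and> chain (y # r))"

lemma chain_Cons: "chain (t # B) \<longleftrightarrow> chain B \<and> (B \<noteq> [] \<longrightarrow> snd t = fst (hd B))"
  by (cases B) auto

lemma chain_snoc: "chain (B @ [t]) \<longleftrightarrow> chain B \<and> (B \<noteq> [] \<longrightarrow> snd (last B) = fst t)"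
proof (induction B rule: chain.induct)
  case 1 then show ?case by simp
next
  case (2 x) then show ?case by simp
next
  case (3 x y r) then show ?case by simp
qed

lemma nrm_tile: "t \<in> all_tiles \<Longrightarrow> nrm t = t"
  by (cases t) (auto simp: nrm_def all_tiles_def)
lemma nrm_flip: "nrm (snd t, fst t) = nrm t"
  by (simp add: nrm_def min.commute max.commute)
lemma vals_flip: "vals (snd t, fst t) = vals t"
  by (auto simp: vals_def)
lemma vals_nrm: "vals (nrm t) = vals t"
  by (auto simp: vals_def nrm_def min_def max_def)

definition Inv :: "state \<Rightarrow> bool" where
  "Inv s \<longleftrightarrow> (\<forall>p\<in>players. fst s p \<subseteq> all_tiles) \<and>
     (\<forall>p\<in>players. \<forall>q\<in>players. p \<noteq> q \<longrightarrow> fst s p \<inter> fst s q = {}) \<and>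
     (\<Union>p\<in>players. fst s p) \<union> nrm ` set (snd s) = all_tiles \<and>
     (\<forall>p\<in>players. fst s p \<inter> nrm ` set (snd s) = {}) \<and>
     distinct (map nrm (snd s)) \<and> chain (snd s)"

lemma Inv_init: "is_deal H \<Longrightarrow> Inv (H, [])"
  unfolding Inv_def is_deal_def by auto

definition placed :: "state \<Rightarrow> nat \<Rightarrow> (nat\<times>nat) \<Rightarrow> (nat\<times>nat) \<Rightarrow> state \<Rightarrow> bool" where
  "placed s p t t' s' \<longleftrightarrow> t \<in> fst s p \<and> nrm t' = nrm t \<and>
     fst s' = (fst s)(p := fst s p - {t}) \<and>
     ((snd s = [] \<and> snd s' = [t']) \<or>
      (snd s \<noteq> [] \<and> snd t' = left_end (snd s) \<and> snd s' = t' # snd s) \<or>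
      (snd s \<noteq> [] \<and> fst t' = right_end (snd s) \<and> snd s' = snd s @ [t']))"

lemma turn_cases:
  assumes "turn p s s'"
  shows "(s' = s \<and> snd s \<noteq> [] \<and> \<not> can_play s p) \<or> (\<exists>t t'. placed s p t t' s')"
proof -
  obtain H B where s: "s = (H, B)" by (cases s)
  show ?thesis
  proof (cases "B = []")
    case True
    then obtain t where t: "t \<in> H p" "fst s' = H(p := H p - {t})"
        "snd s' = [t] \<or> snd s' = [(snd t, fst t)]"
      using assms s by (auto simp: turn_def)
    from t(3) show ?thesis
    proof
      assume "snd s' = [t]"
      then have "placed s p t t s'" using t True s by (simp add: placed_def)
      then show ?thesis by blast
    next
      assume "snd s' = [(snd t, fst t)]"
      then have "placed s p t (snd t, fst t) s'" using t True s by (simp add: placed_def nrm_flip)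
      then show ?thesis by blast
    qed
  next
    case False
    show ?thesis
    proof (cases "can_play s p")
      case True
      then obtain t where t: "t \<in> H p" "fst s' = H(p := H p - {t})" "attach t B (snd s')"
        using assms s False by (auto simp: turn_def)
      from t(3) show ?thesis unfolding attach_def
      proof (elim disjE)
        assume "snd t = left_end B \<and> snd s' = t # B"
        then have "placed s p t t s'" using t False s by (simp add: placed_def)
        then show ?thesis by blast
      next
        assume "fst t = left_end B \<and> snd s' = (snd t, fst t) # B"
        then have "placed s p t (snd t, fst t) s'" using t False s nrm_flip[of t] by (auto simp add: placed_def)
        then show ?thesis by blast
      next
        assume "fst t = right_end B \<and> snd s' = B @ [t]"
        then have "placed s p t t s'" using t False s by (simp add: placed_def)
        then show ?thesis by blast
      next
        assume "snd t = right_end B \<and> snd s' = B @ [(snd t, fst t)]"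
        then have "placed s p t (snd t, fst t) s'" using t False s nrm_flip[of t] by (auto simp add: placed_def)
        then show ?thesis by blast
      qed
    next
      case nc: False
      then show ?thesis using assms s False by (auto simp: turn_def)
    qed
  qed
qed

lemma placed_Inv:
  assumes "Inv s" "p \<in> players" "placed s p t t' s'"
  shows "Inv s'"
proof -
  obtain H B where s: "s = (H, B)" by (cases s)
  obtain H' B' where s': "s' = (H', B')" by (cases s')
  have tH: "t \<in> H p" and nt: "nrm t' = nrm t" and H': "H' = H(p := H p - {t})"
    using assms(3) s s' by (auto simp: placed_def)
  have inv: "\<forall>p\<in>players. H p \<subseteq> all_tiles"
     "\<forall>p\<in>players. \<forall>q\<in>players. p \<noteq> q \<longrightarrow> H p \<inter> H q = {}"
     "(\<Union>p\<in>players. H p) \<union> nrm ` set B = all_tiles"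
     "\<forall>p\<in>players. H p \<inter> nrm ` set B = {}"
     "distinct (map nrm B)" "chain B"
    using assms(1) s by (auto simp: Inv_def)
  have tall: "t \<in> all_tiles" using inv(1) assms(2) tH by auto
  have ntt: "nrm t' = t" using nt nrm_tile[OF tall] by simp
  have tnB: "t \<notin> nrm ` set B" using inv(4) assms(2) tH by blast
  have tother: "\<And>q. q \<in> players \<Longrightarrow> q \<noteq> p \<Longrightarrow> t \<notin> H q" using inv(2) assms(2) tH by blast
  have setB': "nrm ` set B' = insert t (nrm ` set B)" and dB': "distinct (map nrm B')"
     and cB': "chain B'"
    using assms(3) s s' ntt tnB inv(5,6) unfolding placed_def
    by (auto simp: chain_Cons chain_snoc left_end_def right_end_def)
  show ?thesis unfolding Inv_def s' fst_conv snd_conv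
  proof (intro conjI)
    show "\<forall>p\<in>players. H' p \<subseteq> all_tiles" using inv(1) H' by auto
    show "\<forall>pa\<in>players. \<forall>q\<in>players. pa \<noteq> q \<longrightarrow> H' pa \<inter> H' q = {}" using inv(2) H' by auto
    show "(\<Union>p\<in>players. H' p) \<union> nrm ` set B' = all_tiles"
    proof -
      have "(\<Union>p\<in>players. H' p) \<union> nrm ` set B' = (\<Union>p\<in>players. H p) \<union> nrm ` set B"
        using H' setB' tH assms(2) by (auto split: if_splits)
      then show ?thesis using inv(3) by simp
    qed
    show "\<forall>q\<in>players. H' q \<inter> nrm ` set B' = {}"
      using inv(4) H' setB' tother by auto
    show "distinct (map nrm B')" by (rule dB')
    show "chain B'" by (rule cB')
  qed
qed



lemma pot_players: "player_of_turn k \<in> players"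
proof -
  have "k mod 4 < 4" by simp
  then have "k mod 4 = 0 \<or> k mod 4 = 1 \<or> k mod 4 = 2 \<or> k mod 4 = 3" by linarith
  then show ?thesis by (auto simp: player_of_turn_def players_def)
qed

lemma step_cases:
  assumes "legal_game ss" "k < length ss - 1"
  shows "(ss ! Suc k = ss ! k \<and> snd (ss ! k) \<noteq> [] \<and> \<not> can_play (ss ! k) (player_of_turn k)) \<or>
         (\<exists>t t'. placed (ss ! k) (player_of_turn k) t t' (ss ! Suc k))"
  using assms turn_cases unfolding legal_game_def by auto

lemma step_hands: "placed s p t t' s' \<Longrightarrow> fst s' q \<subseteq> fst s q"
  by (auto simp: placed_def)

lemma step_board: "placed s p t t' s' \<Longrightarrow> set (snd s) \<subseteq> set (snd s') \<and> t' \<in> set (snd s') \<and> snd s' \<noteq> []"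
  by (auto simp: placed_def)

lemma game_Inv:
  assumes "legal_game ss" "k \<le> length ss - 1"
  shows "Inv (ss ! k)"
  using assms(2)
proof (induction k)
  case 0
  have "ss ! 0 = (fst (ss ! 0), [])" using assms(1) by (simp add: legal_game_def prod_eq_iff)
  then show ?case using Inv_init assms(1) by (metis legal_game_def)
next
  case (Suc k)
  then have k: "k < length ss - 1" by simp
  have I: "Inv (ss ! k)" using Suc by simp
  from step_cases[OF assms(1) k] show ?case
  proof
    assume "ss ! Suc k = ss ! k \<and> snd (ss ! k) \<noteq> [] \<and> \<not> can_play (ss ! k) (player_of_turn k)"
    then show ?thesis using I by simp
  next
    assume "\<exists>t t'. placed (ss ! k) (player_of_turn k) t t' (ss ! Suc k)"
    then show ?thesis using I placed_Inv pot_players by blast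
  qed
qed

lemma game_mono:
  assumes "legal_game ss" "k \<le> m" "m \<le> length ss - 1"
  shows "fst (ss ! m) p \<subseteq> fst (ss ! k) p \<and> set (snd (ss ! k)) \<subseteq> set (snd (ss ! m)) \<and>
         (snd (ss ! k) \<noteq> [] \<longrightarrow> snd (ss ! m) \<noteq> [])"
  using assms(2,3)
proof (induction m)
  case 0 then show ?case by simp
next
  case (Suc m)
  show ?case
  proof (cases "k = Suc m")
    case True then show ?thesis by simp
  next
    case False
    then have km: "k \<le> m" and m: "m < length ss - 1" using Suc by auto
    have IH: "fst (ss ! m) p \<subseteq> fst (ss ! k) p \<and> set (snd (ss ! k)) \<subseteq> set (snd (ss ! m)) \<and>
         (snd (ss ! k) \<noteq> [] \<longrightarrow> snd (ss ! m) \<noteq> [])" using Suc km m by simp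
    from step_cases[OF assms(1) m] show ?thesis
    proof
      assume "ss ! Suc m = ss ! m \<and> snd (ss ! m) \<noteq> [] \<and> \<not> can_play (ss ! m) (player_of_turn m)"
      then show ?thesis using IH by simp
    next
      assume "\<exists>t t'. placed (ss ! m) (player_of_turn m) t t' (ss ! Suc m)"
      then obtain t t' where "placed (ss ! m) (player_of_turn m) t t' (ss ! Suc m)" by blast
      from step_hands[OF this, of p] step_board[OF this] show ?thesis using IH by blast
    qed
  qed
qed



definition occ :: "nat \<Rightarrow> nat \<times> nat \<Rightarrow> nat" where
  "occ x t = (if fst t = x then 1 else 0) + (if snd t = x then 1 else 0)"

fun junc :: "(nat \<times> nat) list \<Rightarrow> nat list" where
  "junc [] = []"
| "junc [x] = []"
| "junc (x # y # r) = snd x # junc (y # r)"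

lemma chain_occ:
  "chain B \<Longrightarrow> B \<noteq> [] \<Longrightarrow> (\<Sum>e\<leftarrow>B. occ x e) =
     (if fst (hd B) = x then 1 else 0) + (if snd (last B) = x then 1 else 0) + 2 * count_list (junc B) x"
  by (induction B rule: junc.induct) (auto simp: occ_def)

lemma chain_pips:
  "chain B \<Longrightarrow> B \<noteq> [] \<Longrightarrow> (\<Sum>e\<leftarrow>B. pips e) = fst (hd B) + snd (last B) + 2 * sum_list (junc B)"
  by (induction B rule: junc.induct) (auto simp: pips_def)

lemma junc_length: "B \<noteq> [] \<Longrightarrow> length (junc B) + 1 = length B"
  by (induction B rule: junc.induct) auto

lemma junc_set: "set (junc B) \<subseteq> snd ` set B"
  by (induction B rule: junc.induct) auto

lemma sum_list_count: "set xs \<subseteq> X \<Longrightarrow> finite X \<Longrightarrow> sum_list xs = (\<Sum>y\<in>X. y * count_list xs y)"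
proof (induction xs)
  case Nil then show ?case by simp
next
  case (Cons a xs)
  have "(\<Sum>y\<in>X. y * count_list (a # xs) y) = (\<Sum>y\<in>X. y * count_list xs y) + (\<Sum>y\<in>X. if a = y then y else 0)"
    by (simp add: sum.distrib[symmetric] algebra_simps if_distrib cong: if_cong)
  also have "(\<Sum>y\<in>X. if a = y then y else 0) = a" using Cons.prems
    by (simp add: sum.delta)
  finally show ?case using Cons by simp
qed

lemma occ_nrm: "occ x (nrm e) = occ x e"
  by (auto simp: occ_def nrm_def min_def max_def)
lemma pips_nrm: "pips (nrm e) = pips e"
  by (auto simp: pips_def nrm_def min_def max_def)

lemma all_tiles_explicit: "all_tiles = {(0,0),(0,1),(0,2),(0,3),(0,4),(0,5),(0,6),
  (1,1),(1,2),(1,3),(1,4),(1,5),(1,6),(2,2),(2,3),(2,4),(2,5),(2,6),(3,3),(3,4),(3,5),(3,6),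
  (4,4),(4,5),(4,6),(5,5),(5,6),(6,6)}" (is "_ = ?R")
proof
  show "?R \<subseteq> all_tiles" by (simp add: all_tiles_def)
  show "all_tiles \<subseteq> ?R"
  proof
    fix t assume "t \<in> all_tiles"
    then obtain a b where t: "t = (a,b)" "a \<le> b" "b \<le> (6::nat)" by (auto simp: all_tiles_def)
    then have "b = 0 \<or> b = 1 \<or> b = 2 \<or> b = 3 \<or> b = 4 \<or> b = 5 \<or> b = 6" by linarith
    moreover have "a = 0 \<or> a = 1 \<or> a = 2 \<or> a = 3 \<or> a = 4 \<or> a = 5 \<or> a = 6" using t by linarith
    ultimately show "t \<in> ?R" using t by (elim disjE; simp)
  qed
qed

lemma finite_all_tiles: "finite all_tiles" by (simp add: all_tiles_explicit)
lemma card_all_tiles: "card all_tiles = 28" by (simp add: all_tiles_explicit)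
lemma pips_all_tiles: "(\<Sum>t\<in>all_tiles. pips t) = 168" by (simp add: all_tiles_explicit pips_def)
lemma occ_all_tiles: "x \<le> 6 \<Longrightarrow> (\<Sum>t\<in>all_tiles. occ x t) = 8"
proof -
  assume "x \<le> 6"
  then have "x = 0 \<or> x = 1 \<or> x = 2 \<or> x = 3 \<or> x = 4 \<or> x = 5 \<or> x = 6" by linarith
  then show ?thesis by (elim disjE) (simp_all add: all_tiles_explicit occ_def)
qed

lemma occ_zero_iff: "occ x t = 0 \<longleftrightarrow> x \<notin> vals t"
  by (auto simp: occ_def vals_def)

lemma tile_le6: "t \<in> all_tiles \<Longrightarrow> fst t \<le> 6 \<and> snd t \<le> 6 \<and> fst t \<le> snd t"
  by (auto simp: all_tiles_def)

lemma nrm_in_all: "a \<le> 6 \<Longrightarrow> b \<le> 6 \<Longrightarrow> nrm (a,b) \<in> all_tiles"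
  by (auto simp: nrm_def all_tiles_def)

lemma entry_le6:
  assumes "Inv (H, B)" "e \<in> set B" shows "fst e \<le> 6 \<and> snd e \<le> 6"
proof -
  have "nrm e \<in> all_tiles" using assms by (auto simp: Inv_def)
  then show ?thesis by (auto simp: all_tiles_def nrm_def min_def max_def split: if_splits)
qed

lemma final_static:
  assumes I: "Inv (H, B)" and Bne: "B \<noteq> []"
    and blk: "\<forall>p\<in>players. \<forall>t\<in>H p. left_end B \<notin> vals t \<and> right_end B \<notin> vals t"
    and bp: "(\<Sum>e\<leftarrow>B. pips e) = 42"
  shows "left_end B = 0 \<and> right_end B = 0 \<and> card (nrm ` set B) = 10 \<and>
         (\<forall>y\<le>6. (0,y) \<in> nrm ` set B) \<and> (\<forall>y\<in>{1..6}. (\<Sum>t\<in>nrm ` set B. occ y t) = 2)"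
proof -
  define BT where "BT = nrm ` set B"
  define Off where "Off = (\<Union>p\<in>players. H p)"
  have dist: "distinct (map nrm B)" and ch: "chain B" and part: "Off \<union> BT = all_tiles"
    using I by (auto simp: Inv_def BT_def Off_def)
  have "\<forall>p\<in>players. H p \<inter> BT = {}" using I by (simp add: Inv_def BT_def)
  then have disj: "Off \<inter> BT = {}" unfolding Off_def by blast
  have finBT: "finite BT" by (simp add: BT_def)
  have BTsub: "BT \<subseteq> all_tiles" using part by blast
  have sumBT: "\<And>g::nat \<times> nat \<Rightarrow> nat. (\<forall>e. g (nrm e) = g e) \<Longrightarrow> (\<Sum>t\<in>BT. g t) = (\<Sum>e\<leftarrow>B. g e)"
  proof -
    fix g :: "nat \<times> nat \<Rightarrow> nat" assume h: "\<forall>e. g (nrm e) = g e"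
    have 1: "(\<Sum>t\<in>BT. g t) = sum_list (map g (map nrm B))"
      using sum_list_distinct_conv_sum_set[OF dist, of g] by (simp add: BT_def)
    have 2: "map g (map nrm B) = map g B" using h by (induct B) auto
    show "(\<Sum>t\<in>BT. g t) = (\<Sum>e\<leftarrow>B. g e)" by (simp only: 1 2)
  qed
  define l where "l = left_end B"
  define r where "r = right_end B"
  define c where "c = count_list (junc B)"
  have occBT: "\<And>x. (\<Sum>t\<in>BT. occ x t) = (if l = x then 1 else 0) + (if r = x then 1 else 0) + 2 * c x"
    using sumBT[of "occ _"] occ_nrm chain_occ[OF ch Bne] by (simp add: l_def r_def c_def left_end_def right_end_def)
  have l6: "l \<le> 6" using entry_le6[OF I, of "hd B"] Bne by (simp add: l_def left_end_def)
  have r6: "r \<le> 6" using entry_le6[OF I, of "last B"] Bne by (simp add: r_def right_end_def)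
  have full: "\<And>x t. x \<in> {l, r} \<Longrightarrow> t \<in> all_tiles \<Longrightarrow> x \<in> vals t \<Longrightarrow> t \<in> BT"
  proof (rule ccontr)
    fix x t assume "x \<in> {l, r}" "t \<in> all_tiles" "x \<in> vals t" "t \<notin> BT"
    then have "t \<in> Off" using part by blast
    then obtain p where "p \<in> players" "t \<in> H p" by (auto simp: Off_def)
    then show False using blk \<open>x \<in> {l, r}\<close> \<open>x \<in> vals t\<close> by (auto simp: l_def r_def)
  qed
  have occ8: "\<And>x. x \<in> {l, r} \<Longrightarrow> (\<Sum>t\<in>BT. occ x t) = 8"
  proof -
    fix x assume x: "x \<in> {l, r}"
    then have x6: "x \<le> 6" using l6 r6 by auto
    have "(\<Sum>t\<in>all_tiles - BT. occ x t) = 0"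
    proof (rule sum.neutral, rule ballI)
      fix t assume "t \<in> all_tiles - BT"
      then show "occ x t = 0" using full[OF x] occ_zero_iff by blast
    qed
    moreover have "(\<Sum>t\<in>all_tiles. occ x t) = (\<Sum>t\<in>BT. occ x t) + (\<Sum>t\<in>all_tiles - BT. occ x t)"
      using sum.subset_diff[OF BTsub finite_all_tiles, of "occ x"] by simp
    ultimately show "(\<Sum>t\<in>BT. occ x t) = 8" using occ_all_tiles[OF x6] by simp
  qed
  have lr: "l = r"
  proof (rule ccontr)
    assume "l \<noteq> r"
    then have "(\<Sum>t\<in>BT. occ l t) = 1 + 2 * c l" using occBT[of l] by simp
    moreover have "(\<Sum>t\<in>BT. occ l t) = 8" using occ8[of l] by simp
    ultimately show False by presburger
  qed
  have cl: "c l = 3" using occBT[of l] occ8[of l] lr by simp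
  have cy: "\<And>y. y \<le> 6 \<Longrightarrow> y \<noteq> l \<Longrightarrow> c y \<ge> 1"
  proof -
    fix y assume y: "y \<le> 6" "y \<noteq> l"
    have tin: "nrm (l, y) \<in> BT" using full[of l "nrm (l,y)"] nrm_in_all[OF l6 y(1)] vals_nrm[of "(l,y)"]
      by (auto simp: vals_def)
    have "occ y (nrm (l, y)) = 1" using y by (simp only: occ_nrm) (simp add: occ_def)
    then have "1 \<le> (\<Sum>t\<in>BT. occ y t)" using member_le_sum[OF tin, of "occ y"] finBT by simp
    then show "c y \<ge> 1" using occBT[of y] y lr by simp
  qed
  have pipsB: "(\<Sum>e\<leftarrow>B. pips e) = l + r + 2 * sum_list (junc B)"
    using chain_pips[OF ch Bne] by (simp add: l_def r_def left_end_def right_end_def)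
  have jset: "set (junc B) \<subseteq> {0,1,2,3,4,5,6}"
  proof
    fix v assume "v \<in> set (junc B)"
    then obtain e where "e \<in> set B" "v = snd e" using junc_set by blast
    then have "v \<le> 6" using entry_le6[OF I] by auto
    then show "v \<in> {0,1,2,3,4,5,6}" by auto
  qed
  have sj: "sum_list (junc B) = (\<Sum>y\<in>{0,1,2,3,4,5,6}. y * c y)"
    using sum_list_count[OF jset] by (simp add: c_def)
  have lj: "length (junc B) = (\<Sum>y\<in>{0,1,2,3,4,5,6}. c y)"
    using sum_count_set[OF jset] by (simp add: c_def)
  have eq21: "l + (c 1 + 2 * c 2 + 3 * c 3 + 4 * c 4 + 5 * c 5 + 6 * c 6) = 21"
    using bp pipsB sj lr by simp
  have "l = 0 \<or> l = 1 \<or> l = 2 \<or> l = 3 \<or> l = 4 \<or> l = 5 \<or> l = 6" using l6 by linarith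
  then have l0: "l = 0" and cs: "c 1 = 1" "c 2 = 1" "c 3 = 1" "c 4 = 1" "c 5 = 1" "c 6 = 1"
    using eq21 cl cy[of 0] cy[of 1] cy[of 2] cy[of 3] cy[of 4] cy[of 5] cy[of 6]
    by (auto)
  have c0: "c 0 = 3" using cl l0 by simp
  have "length B = 10" using junc_length[OF Bne] lj cs c0 by simp
  then have cardBT: "card BT = 10" using distinct_card[OF dist] by (simp add: BT_def)
  have zero: "\<forall>y\<le>6. (0,y) \<in> BT"
  proof (intro allI impI)
    fix y :: nat assume "y \<le> 6"
    then show "(0,y) \<in> BT" using full[of 0 "(0,y)"] l0 by (auto simp: all_tiles_def vals_def)
  qed
  have o2: "\<forall>y\<in>{1..6}. (\<Sum>t\<in>BT. occ y t) = 2"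
    using occBT l0 lr cs by (auto simp: atLeastAtMost_iff le_Suc_eq numeral_eq_Suc)
  show ?thesis using l0 lr cardBT zero o2 by (simp add: BT_def l_def r_def)
qed



lemma matching:
  assumes finBT: "finite BT" and sub: "BT \<subseteq> all_tiles"
    and zero: "\<forall>y\<le>6. (0,y) \<in> BT" and o2: "\<forall>y\<in>{1..6}. (\<Sum>t\<in>BT. occ y t) = 2"
  shows "\<forall>y\<in>{1..6}. \<exists>z\<in>{1..6}. z \<noteq> y \<and> nrm (y,z) \<in> BT"
    and "\<forall>y z1 z2. y \<in> {1..6} \<longrightarrow> z1 \<in> {1..6} \<longrightarrow> z2 \<in> {1..6} \<longrightarrow> nrm (y,z1) \<in> BT \<longrightarrow> nrm (y,z2) \<in> BT \<longrightarrow> z1 = z2"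
proof -
  show uniq: "\<forall>y z1 z2. y \<in> {1..6} \<longrightarrow> z1 \<in> {1..6} \<longrightarrow> z2 \<in> {1..6} \<longrightarrow> nrm (y,z1) \<in> BT \<longrightarrow> nrm (y,z2) \<in> BT \<longrightarrow> z1 = z2"
  proof (intro allI impI, rule ccontr)
    fix y z1 z2 :: nat
    assume y: "y \<in> {1..6}" and z: "z1 \<in> {1..6}" "z2 \<in> {1..6}" and in1: "nrm (y,z1) \<in> BT"
      and in2: "nrm (y,z2) \<in> BT" and ne: "z1 \<noteq> z2"
    have y0: "(0,y) \<in> BT" using zero y by auto
    let ?T = "{(0,y), nrm (y,z1), nrm (y,z2)}"
    have d1: "(0,y) \<noteq> nrm (y,z1)" "(0,y) \<noteq> nrm (y,z2)" "nrm (y,z1) \<noteq> nrm (y,z2)"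
      using y z ne by (auto simp: nrm_def min_def max_def split: if_splits)
    have "(\<Sum>t\<in>?T. occ y t) \<le> (\<Sum>t\<in>BT. occ y t)"
      using y0 in1 in2 finBT by (intro sum_mono2) auto
    moreover have "(\<Sum>t\<in>?T. occ y t) \<ge> 3"
    proof -
      have "(\<Sum>t\<in>?T. occ y t) = occ y (0,y) + occ y (nrm (y,z1)) + occ y (nrm (y,z2))"
        using d1 by simp
      moreover have "occ y (0,y) \<ge> 1" "occ y (nrm (y,z1)) \<ge> 1" "occ y (nrm (y,z2)) \<ge> 1"
        by (simp_all only: occ_nrm) (simp_all add: occ_def)
      ultimately show ?thesis by linarith
    qed
    ultimately show False using o2 y by auto
  qed
  show "\<forall>y\<in>{1..6}. \<exists>z\<in>{1..6}. z \<noteq> y \<and> nrm (y,z) \<in> BT"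
  proof
    fix y :: nat assume y: "y \<in> {1..6}"
    have y0: "(0,y) \<in> BT" using zero y by auto
    have "(\<Sum>t\<in>BT. occ y t) = occ y (0,y) + (\<Sum>t\<in>BT - {(0,y)}. occ y t)"
      using sum.remove[OF finBT y0] by simp
    then have s1: "(\<Sum>t\<in>BT - {(0,y)}. occ y t) = 1" using o2 y by (simp add: occ_def)
    then obtain t where t: "t \<in> BT - {(0,y)}" "occ y t \<noteq> 0"
      by (metis one_neq_zero sum.neutral)
    have tle: "occ y t \<le> 1" using member_le_sum[OF t(1), of "occ y"] finBT s1 by simp
    have ta: "t \<in> all_tiles" using t sub by auto
    obtain a b where ab: "t = (a,b)" by (cases t)
    have abr: "a \<le> b" "b \<le> 6" using ta ab by (auto simp: all_tiles_def)
    have yv: "y = a \<or> y = b" using t(2) ab by (auto simp: occ_def split: if_splits)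
    define z where "z = (if a = y then b else a)"
    have tz: "t = nrm (y, z)" using yv abr ab by (auto simp: z_def nrm_def)
    have zy: "z \<noteq> y" using tle yv ab by (auto simp: z_def occ_def)
    have z0: "z \<noteq> 0" using t(1) tz y by (auto simp: nrm_def z_def)
    have z6: "z \<le> 6" using abr yv y by (auto simp: z_def)
    show "\<exists>z\<in>{1..6}. z \<noteq> y \<and> nrm (y,z) \<in> BT"
      using zy z0 z6 tz t(1) by (intro bexI[of _ z]) auto
  qed
qed

definition dfc :: "nat \<times> nat \<Rightarrow> nat" where
  "dfc t = (if t = (1,1) then 3 else if t = (1,2) then 2 else if t = (1,3) \<or> t = (2,2) then 1 else 0)"

lemma dfc_bound: "t \<in> all_tiles \<Longrightarrow> fst t \<noteq> 0 \<Longrightarrow> pips t + dfc t \<ge> 5"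
  by (cases t) (auto simp: all_tiles_def pips_def dfc_def)

definition Dset :: "(nat \<times> nat) set" where "Dset = {(1,1),(1,2),(1,3),(2,2)}"

lemma W_small:
  assumes W: "W \<subseteq> all_tiles" "\<forall>t\<in>W. fst t \<noteq> 0" and p18: "(\<Sum>t\<in>W. pips t) = 18"
  shows "card W \<le> 5"
    and "card W = 5 \<Longrightarrow> W = {(1,1),(1,2),(1,3),(2,2),(1,4)} \<or> W = {(1,1),(1,2),(1,3),(2,2),(2,3)}"
proof -
  have finW: "finite W" using W(1) finite_subset finite_all_tiles by blast
  have "(\<Sum>t\<in>W. dfc t) = (\<Sum>t\<in>W \<inter> Dset. dfc t)"
    by (rule sum.mono_neutral_right) (auto simp: finW Dset_def dfc_def)
  also have "\<dots> \<le> (\<Sum>t\<in>Dset. dfc t)" by (rule sum_mono2) (auto simp: Dset_def)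
  also have "\<dots> = 7" by (simp add: Dset_def dfc_def)
  finally have d7: "(\<Sum>t\<in>W. dfc t) \<le> 7" .
  have "(\<Sum>t\<in>W. (5::nat)) \<le> (\<Sum>t\<in>W. pips t + dfc t)"
  proof (rule sum_mono)
    fix t assume "t \<in> W" then show "5 \<le> pips t + dfc t" using dfc_bound W by blast
  qed
  then have "5 * card W \<le> (\<Sum>t\<in>W. pips t + dfc t)" by (simp add: mult.commute)
  also have "\<dots> = 18 + (\<Sum>t\<in>W. dfc t)" using p18 by (simp add: sum.distrib)
  finally have main: "5 * card W \<le> 18 + (\<Sum>t\<in>W. dfc t)" .
  then show "card W \<le> 5" using d7 by linarith
  assume c5: "card W = 5"
  then have d7': "(\<Sum>t\<in>W. dfc t) = 7" using main d7 by linarith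
  have DW: "Dset \<subseteq> W"
  proof (rule ccontr)
    assume "\<not> Dset \<subseteq> W"
    then obtain t0 where t0: "t0 \<in> Dset" "t0 \<notin> W" by blast
    have "(\<Sum>t\<in>W. dfc t) = (\<Sum>t\<in>W \<inter> Dset. dfc t)"
      by (rule sum.mono_neutral_right) (auto simp: finW Dset_def dfc_def)
    also have "\<dots> \<le> (\<Sum>t\<in>Dset - {t0}. dfc t)" using t0 by (intro sum_mono2) (auto simp: Dset_def)
    also have "\<dots> < 7" using t0(1) unfolding Dset_def
      by (elim insertE emptyE) (simp_all add: dfc_def insert_Diff_if)
    finally show False using d7' by simp
  qed
  have cD: "card Dset = 4" by (simp add: Dset_def)
  have "card (W - Dset) = 1" using card_Diff_subset[OF _ DW] c5 cD by (simp add: Dset_def)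
  then obtain x where x: "W - Dset = {x}" using card_1_singletonE by blast
  have Wx: "W = insert x Dset" using x DW by blast
  have xD: "x \<notin> Dset" using x by blast
  have "(\<Sum>t\<in>W. pips t) = pips x + (\<Sum>t\<in>Dset. pips t)" using Wx xD by (simp add: Dset_def)
  then have px: "pips x = 5" using p18 by (simp add: Dset_def pips_def)
  have xa: "x \<in> all_tiles" "fst x \<noteq> 0" using Wx W by auto
  then have "x = (1,4) \<or> x = (2,3)" using px by (cases x) (auto simp: all_tiles_def pips_def)
  then show "W = {(1,1),(1,2),(1,3),(2,2),(1,4)} \<or> W = {(1,1),(1,2),(1,3),(2,2),(2,3)}"
    using Wx by (auto simp: Dset_def)
qed

lemma card_pairs_le:
  "finite V \<Longrightarrow> card {p \<in> V \<times> V. fst p \<le> (snd p :: nat)} \<le> card V * (card V + 1) div 2"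
proof (induction V rule: finite_induct)
  case empty then show ?case by simp
next
  case (insert x V)
  let ?P = "\<lambda>V. {p \<in> V \<times> V. fst p \<le> (snd p :: nat)}"
  have "?P (insert x V) \<subseteq> ?P V \<union> {(x,x)} \<union> (\<lambda>b. if x \<le> b then (x,b) else (b,x)) ` V"
    by auto
  then have "card (?P (insert x V)) \<le> card (?P V \<union> {(x,x)} \<union> (\<lambda>b. if x \<le> b then (x,b) else (b,x)) ` V)"
    using insert by (intro card_mono) auto
  also have "\<dots> \<le> card (?P V) + 1 + card V"
  proof -
    have "card (?P V \<union> {(x,x)} \<union> (\<lambda>b. if x \<le> b then (x,b) else (b,x)) ` V)
       \<le> card (?P V \<union> {(x,x)}) + card ((\<lambda>b. if x \<le> b then (x,b) else (b,x)) ` V)"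
      by (rule card_Un_le)
    also have "card (?P V \<union> {(x,x)}) \<le> card (?P V) + card {(x,x)}" by (rule card_Un_le)
    also have "card ((\<lambda>b. if x \<le> b then (x,b) else (b,x)) ` V) \<le> card V" by (rule card_image_le[OF insert(1)])
    finally show ?thesis by simp
  qed
  finally show ?case using insert by simp
qed



definition lack :: "(nat \<times> nat) set \<Rightarrow> nat set" where
  "lack X = {v\<in>{1..6}. \<forall>t\<in>X. v \<notin> vals t}"

lemma vals_nrm2: "vals (nrm (a,b)) = {a,b}"
  by (auto simp: vals_def nrm_def min_def max_def)
lemma nrm_sym: "nrm (a,b) = nrm (b,a)"
  by (simp add: nrm_def min.commute max.commute)
lemma nrm_eq_iff: "nrm (a,b) = nrm (c,d) \<longleftrightarrow> {a,b} = {c,d}"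
  by (auto simp: nrm_def min_def max_def doubleton_eq_iff split: if_splits)
lemma nrm_double: "fst (nrm (a,b)) = snd (nrm (a,b)) \<longleftrightarrow> a = b"
  by (auto simp: nrm_def min_def max_def)
lemma nrm_fst0: "a \<noteq> 0 \<Longrightarrow> b \<noteq> 0 \<Longrightarrow> fst (nrm (a,b)) \<noteq> 0"
  by (auto simp: nrm_def min_def)

lemma hand_bound:
  assumes X: "X \<subseteq> all_tiles - BT" and zero: "\<forall>y\<le>6. (0,y) \<in> BT"
  shows "card X \<le> (6 - card (lack X)) * (6 - card (lack X) + 1) div 2"
proof -
  define V where "V = {1..6::nat} - lack X"
  have cV: "card V = 6 - card (lack X)"
    unfolding V_def by (subst card_Diff_subset) (auto simp: lack_def)
  have "X \<subseteq> {p \<in> V \<times> V. fst p \<le> snd p}"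
  proof
    fix t assume t: "t \<in> X"
    then have ta: "t \<in> all_tiles" "t \<notin> BT" using X by auto
    obtain a b where ab: "t = (a,b)" by (cases t)
    have "a \<noteq> 0"
    proof
      assume "a = 0" then have "t = (0,b)" "b \<le> 6" using ab ta by (auto simp: all_tiles_def)
      then show False using zero ta by auto
    qed
    then have r: "1 \<le> a" "a \<le> b" "b \<le> 6" using ta ab by (auto simp: all_tiles_def)
    have "a \<notin> lack X" "b \<notin> lack X" using t ab unfolding lack_def vals_def by (auto intro!: bexI[of _ t])
    then show "t \<in> {p \<in> V \<times> V. fst p \<le> snd p}" using r ab by (auto simp: V_def)
  qed
  then have "card X \<le> card {p \<in> V \<times> V. fst p \<le> snd p}"
    by (intro card_mono) (auto simp: V_def)
  also have "\<dots> \<le> card V * (card V + 1) div 2" by (rule card_pairs_le) (simp add: V_def)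
  finally show ?thesis using cV by simp
qed

lemma hand7: "X \<subseteq> all_tiles - BT \<Longrightarrow> \<forall>y\<le>6. (0,y) \<in> BT \<Longrightarrow> card X = 7 \<Longrightarrow> card (lack X) \<le> 2"
proof -
  assume a: "X \<subseteq> all_tiles - BT" "\<forall>y\<le>6. (0,y) \<in> BT" "card X = 7"
  have h: "7 \<le> (6 - card (lack X)) * (6 - card (lack X) + 1) div 2" using hand_bound[OF a(1,2)] a(3) by simp
  show ?thesis
  proof (rule ccontr)
    assume "\<not> card (lack X) \<le> 2"
    then have "6 - card (lack X) \<le> 3" by linarith
    then have "6 - card (lack X) = 0 \<or> 6 - card (lack X) = 1 \<or> 6 - card (lack X) = 2 \<or> 6 - card (lack X) = 3" by linarith
    then show False using h by auto
  qed
qed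

lemma hand6: "X \<subseteq> all_tiles - BT \<Longrightarrow> \<forall>y\<le>6. (0,y) \<in> BT \<Longrightarrow> card X = 6 \<Longrightarrow> card (lack X) \<le> 3"
proof -
  assume a: "X \<subseteq> all_tiles - BT" "\<forall>y\<le>6. (0,y) \<in> BT" "card X = 6"
  have h: "6 \<le> (6 - card (lack X)) * (6 - card (lack X) + 1) div 2" using hand_bound[OF a(1,2)] a(3) by simp
  show ?thesis
  proof (rule ccontr)
    assume "\<not> card (lack X) \<le> 3"
    then have "6 - card (lack X) \<le> 2" by linarith
    then have "6 - card (lack X) = 0 \<or> 6 - card (lack X) = 1 \<or> 6 - card (lack X) = 2" by linarith
    then show False using h by auto
  qed
qed

lemma W_facts:
  assumes "W = {(1,1),(1,2),(1,3),(2,2),x}" "x = (1,4) \<or> x = (2,3)"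
  shows "\<forall>t1\<in>W. \<forall>t2\<in>W. fst t1 \<noteq> snd t1 \<longrightarrow> fst t2 \<noteq> snd t2 \<longrightarrow> vals t1 \<inter> vals t2 \<noteq> {}"
    and "card W = 5" and "(1,1) \<in> W" and "(2,2) \<in> W"
  using assms by (auto simp: vals_def)

lemma lack_sub: "lack X \<subseteq> {1..6}" by (auto simp: lack_def)
lemma lackD: "v \<in> lack X \<Longrightarrow> t \<in> X \<Longrightarrow> v \<notin> vals t" by (auto simp: lack_def)



lemma hand_sub:
  assumes X: "X \<subseteq> all_tiles - BT" and zero: "\<forall>y\<le>6. (0,y) \<in> BT"
  shows "X \<subseteq> {p \<in> ({1..6} - lack X) \<times> ({1..6} - lack X). fst p \<le> snd p}"
proof
  fix t assume t: "t \<in> X"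
  then have ta: "t \<in> all_tiles" "t \<notin> BT" using X by auto
  obtain a b where ab: "t = (a,b)" by (cases t)
  have "a \<noteq> 0"
  proof
    assume "a = 0" then have "t = (0,b)" "b \<le> 6" using ab ta by (auto simp: all_tiles_def)
    then show False using zero ta by auto
  qed
  then have r: "1 \<le> a" "a \<le> b" "b \<le> 6" using ta ab by (auto simp: all_tiles_def)
  have "a \<notin> lack X" "b \<notin> lack X" using t ab unfolding lack_def vals_def by (auto intro!: bexI[of _ t])
  then show "t \<in> {p \<in> ({1..6} - lack X) \<times> ({1..6} - lack X). fst p \<le> snd p}" using r ab by auto
qed

lemma finish4:
  assumes L: "L \<subseteq> all_tiles - BT" "L' \<subseteq> all_tiles - BT" and zero: "\<forall>y\<le>6. (0,y) \<in> BT"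
    and c: "card L = 7" "card L' = 7"
    and all: "\<forall>v\<in>{1..6}. v \<in> lack L \<union> lack L'"
  shows False
proof -
  have "{1..6} \<subseteq> lack L \<union> lack L'" using all by blast
  then have "card {1..6::nat} \<le> card (lack L \<union> lack L')"
    by (intro card_mono) (auto intro: finite_subset[OF lack_sub])
  also have "\<dots> \<le> card (lack L) + card (lack L')" by (rule card_Un_le)
  also have "\<dots> \<le> 4" using hand7[OF L(1) zero c(1)] hand7[OF L(2) zero c(2)] by simp
  finally show False by simp
qed

lemma finish5:
  fixes BT W L L' :: "(nat \<times> nat) set"
  assumes sub: "BT \<subseteq> all_tiles"
    and zero: "\<forall>y\<le>6. (0,y) \<in> BT"
    and m1: "\<forall>y\<in>{1..6}. \<exists>z\<in>{1..6}. z \<noteq> y \<and> nrm (y,z) \<in> BT"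
    and m2: "\<forall>y z1 z2. y \<in> {1..6} \<longrightarrow> z1 \<in> {1..6} \<longrightarrow> z2 \<in> {1..6} \<longrightarrow> nrm (y,z1) \<in> BT \<longrightarrow> nrm (y,z2) \<in> BT \<longrightarrow> z1 = z2"
    and nz3: "card {t\<in>BT. fst t \<noteq> 0} = 3"
    and part: "W \<union> L \<union> L' = all_tiles - BT"
    and Wc: "W = {(1,1),(1,2),(1,3),(2,2),x}" "x = (1,4) \<or> x = (2,3)"
    and cL: "card L = 7" and cL': "card L' = 6"
    and U: "\<exists>T\<in>BT. \<forall>v\<in>{1..6}. v \<notin> lack L \<union> lack L' \<longrightarrow> v \<in> vals T"
  shows False
proof -
  define A where "A = lack L"
  define A' where "A' = lack L'"
  have LO: "L \<subseteq> all_tiles - BT" "L' \<subseteq> all_tiles - BT" "W \<subseteq> all_tiles - BT" using part by auto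
  have cA: "card A \<le> 2" using hand7[OF LO(1) zero cL] by (simp add: A_def)
  have cA': "card A' \<le> 3" using hand6[OF LO(2) zero cL'] by (simp add: A'_def)
  have As: "A \<subseteq> {1..6}" "A' \<subseteq> {1..6}" using lack_sub by (auto simp: A_def A'_def)
  have finA: "finite A" "finite A'" using As finite_subset by auto
  have Wf: "\<forall>t1\<in>W. \<forall>t2\<in>W. fst t1 \<noteq> snd t1 \<longrightarrow> fst t2 \<noteq> snd t2 \<longrightarrow> vals t1 \<inter> vals t2 \<noteq> {}"
    "card W = 5" "(1,1) \<in> W" "(2,2) \<in> W" using W_facts[OF Wc] by auto
  have finW: "finite W" using Wc by simp
  have off: "\<And>t. t \<in> all_tiles \<Longrightarrow> t \<notin> BT \<Longrightarrow> t \<in> W \<or> t \<in> L \<or> t \<in> L'" using part by blast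
  have inall: "\<And>a b. a \<in> {1..6} \<Longrightarrow> b \<in> {1..6} \<Longrightarrow> nrm (a,b) \<in> all_tiles"
    by (rule nrm_in_all) auto
  have cross: "\<And>a a'. a \<in> A \<Longrightarrow> a' \<in> A' \<Longrightarrow> nrm (a,a') \<in> W \<or> nrm (a,a') \<in> BT"
  proof -
    fix a a' assume a: "a \<in> A" "a' \<in> A'"
    have "nrm (a,a') \<notin> L" using lackD[of a L "nrm (a,a')"] a by (auto simp: A_def vals_nrm2)
    moreover have "nrm (a,a') \<notin> L'" using lackD[of a' L' "nrm (a,a')"] a by (auto simp: A'_def vals_nrm2)
    ultimately show "nrm (a,a') \<in> W \<or> nrm (a,a') \<in> BT" using off[OF inall] a As by blast
  qed
  have disjAA: "A \<inter> A' = {}"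
  proof (rule ccontr)
    assume "A \<inter> A' \<noteq> {}"
    then obtain v where v: "v \<in> A" "v \<in> A'" by blast
    then have v6: "v \<in> {1..6}" using As by auto
    obtain p where p: "p \<in> {1..6}" "p \<noteq> v" "nrm (v,p) \<in> BT" using m1 v6 by blast
    define Z where "Z = {1..6::nat} - {p}"
    have cZ: "card Z = 5" using p by (simp add: Z_def)
    have img: "(\<lambda>z. nrm (v,z)) ` Z \<subseteq> W"
    proof
      fix t assume "t \<in> (\<lambda>z. nrm (v,z)) ` Z"
      then obtain z where z: "z \<in> Z" "t = nrm (v,z)" by blast
      have z6: "z \<in> {1..6}" "z \<noteq> p" using z by (auto simp: Z_def)
      have nb: "t \<notin> BT" using m2 v6 z6 p z by blast
      have "t \<notin> L" using lackD[of v L t] v z by (auto simp: A_def vals_nrm2)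
      moreover have "t \<notin> L'" using lackD[of v L' t] v z by (auto simp: A'_def vals_nrm2)
      ultimately show "t \<in> W" using off[OF inall[OF v6 z6(1)]] nb z by blast
    qed
    have inj: "inj_on (\<lambda>z. nrm (v,z)) Z"
    proof
      fix z1 z2 assume "z1 \<in> Z" "z2 \<in> Z" "nrm (v,z1) = nrm (v,z2)"
      then have "{v,z1} = {v,z2}" by (simp add: nrm_eq_iff)
      then show "z1 = z2" by (metis doubleton_eq_iff)
    qed
    have "card ((\<lambda>z. nrm (v,z)) ` Z) = 5" using card_image[OF inj] cZ by simp
    then have eqW: "(\<lambda>z. nrm (v,z)) ` Z = W" using card_subset_eq[OF finW img] Wf(2) by simp
    obtain z1 where "nrm (v,z1) = (1,1)" using Wf(3) eqW by (metis imageE)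
    then have "vals (nrm (v,z1)) = {1}" by (simp add: vals_def)
    then have "v = 1" by (simp add: vals_nrm2)
    obtain z2 where "nrm (v,z2) = (2,2)" using Wf(4) eqW by (metis imageE)
    then have "vals (nrm (v,z2)) = {2}" by (simp add: vals_def)
    then have "v = 2" by (simp add: vals_nrm2)
    then show False using \<open>v = 1\<close> by simp
  qed
  obtain T where T: "T \<in> BT" "\<forall>v\<in>{1..6}. v \<notin> A \<union> A' \<longrightarrow> v \<in> vals T" using U by (auto simp: A_def A'_def)
  define Us where "Us = {1..6::nat} - (A \<union> A')"
  have UsT: "Us \<subseteq> vals T" using T by (auto simp: Us_def)
  have cvT: "card (vals T) \<le> 2" by (simp add: vals_def card_insert_le_m1)
  have cUs: "card Us \<le> 2" using card_mono[OF _ UsT] cvT by (simp add: vals_def) 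
  have cUn: "card (A \<union> A') = card A + card A'" using card_Un_disjoint[OF finA disjAA] .
  have cUs2: "card Us = 6 - (card A + card A')"
    using As cUn by (simp add: Us_def card_Diff_subset finA)
  have ge4: "card A + card A' \<ge> 4" using cUs cUs2 cA cA' by linarith
  have finBT: "finite BT" using finite_subset[OF sub finite_all_tiles] .
  have NZ: "finite {t\<in>BT. fst t \<noteq> 0}" using finBT by simp
  show False
  proof (cases "card A + card A' = 5")
    case True
    then have cUs1: "card Us = 1" using cUs2 by simp
    then obtain z where z: "Us = {z}" using card_1_singletonE by blast
    then have z6: "z \<in> {1..6}" "z \<notin> A" "z \<notin> A'" by (auto simp: Us_def)
    obtain pz where pz: "pz \<in> {1..6}" "pz \<noteq> z" "nrm (z,pz) \<in> BT" using m1 z6 by blast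
    define C where "C = (\<lambda>(a,a'). nrm (a,a')) ` (A \<times> A')"
    have inj: "inj_on (\<lambda>(a,a'). nrm (a,a')) (A \<times> A')"
    proof (rule inj_onI, clarify)
      fix a1 a1' a2 a2' assume h: "a1 \<in> A" "a1' \<in> A'" "a2 \<in> A" "a2' \<in> A'" "nrm (a1,a1') = nrm (a2,a2')"
      then have e: "{a1,a1'} = {a2,a2'}" by (simp add: nrm_eq_iff)
      have "a1 \<noteq> a2'" "a2 \<noteq> a1'" using h disjAA by auto
      then show "a1 = a2 \<and> a1' = a2'" using e by (metis doubleton_eq_iff)
    qed
    have cC: "card C = card A * card A'" using card_image[OF inj] by (simp add: C_def card_cartesian_product)
    have cC6: "card C = 6"
    proof -
      have "card A = 2" "card A' = 3" using True cA cA' by linarith+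
      then show ?thesis using cC by simp
    qed
    have Csub: "C \<subseteq> (W - {(1,1),(2,2)}) \<union> ({t\<in>BT. fst t \<noteq> 0} - {nrm (z,pz)})"
    proof
      fix t assume "t \<in> C"
      then obtain a a' where aa: "a \<in> A" "a' \<in> A'" "t = nrm (a,a')" by (auto simp: C_def)
      have ne: "a \<noteq> a'" using aa disjAA by auto
      have nd: "fst t \<noteq> snd t" using ne aa nrm_double by simp
      have "a \<noteq> 0" "a' \<noteq> 0" using aa As by auto
      then have f0: "fst t \<noteq> 0" using aa nrm_fst0[of a a'] by simp
      have nz: "t \<noteq> nrm (z,pz)"
      proof
        assume "t = nrm (z,pz)"
        then have "{a,a'} = {z,pz}" using aa by (simp add: nrm_eq_iff)
        then have "z \<in> {a,a'}" by auto
        then show False using z6 aa by auto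
      qed
      show "t \<in> (W - {(1,1),(2,2)}) \<union> ({t\<in>BT. fst t \<noteq> 0} - {nrm (z,pz)})"
        using cross[OF aa(1,2)] aa(3) nd f0 nz by auto
    qed
    have c1: "card (W - {(1,1),(2,2)}) = 3" using Wf by (simp add: card_Diff_subset)
    have pzNZ: "nrm (z,pz) \<in> {t\<in>BT. fst t \<noteq> 0}" using pz z6 nrm_fst0[of z pz] by auto
    have c2: "card ({t\<in>BT. fst t \<noteq> 0} - {nrm (z,pz)}) = 2"
      using nz3 pzNZ NZ by (simp add: card_Diff_singleton)
    have "card C \<le> card ((W - {(1,1),(2,2)}) \<union> ({t\<in>BT. fst t \<noteq> 0} - {nrm (z,pz)}))"
      using Csub finW NZ by (intro card_mono) auto
    also have "\<dots> \<le> 3 + 2" using card_Un_le c1 c2 by metis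
    finally show False using cC6 by simp
  next
    case False
    then have s4: "card A + card A' = 4" using ge4 cUn card_mono[of "{1..6::nat}" "A \<union> A'"] As
      cA cA' by linarith
    then have cUs4: "card Us = 2" using cUs2 by simp
    have UsT': "Us = vals T"
      using card_subset_eq[OF _ UsT] cUs4 cvT card_mono[OF _ UsT] by (simp add: vals_def)
    show False
    proof (cases "card A = 1")
      case True
      then have cA3: "card A' = 3" using s4 by simp
      define V' where "V' = {1..6::nat} - A'"
      have cV': "card V' = 3" using cA3 As by (simp add: V'_def card_Diff_subset finA)
      have Lsub: "L' \<subseteq> {p \<in> V' \<times> V'. fst p \<le> snd p}"
        using hand_sub[OF LO(2) zero] by (simp add: V'_def A'_def)
      have Tall: "T \<in> all_tiles" using T sub by auto
      have TV: "T \<in> {p \<in> V' \<times> V'. fst p \<le> snd p}"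
      proof -
        have "fst T \<in> Us" "snd T \<in> Us" using UsT' by (auto simp: vals_def)
        then show ?thesis using Tall by (auto simp: Us_def V'_def all_tiles_def)
      qed
      have TL: "T \<notin> L'" using LO(2) T by auto
      have finP: "finite {p \<in> V' \<times> V'. fst p \<le> snd p}" by (simp add: V'_def)
      have "card L' \<le> card ({p \<in> V' \<times> V'. fst p \<le> snd p} - {T})"
        using Lsub TL finP by (intro card_mono) auto
      also have "\<dots> = card {p \<in> V' \<times> V'. fst p \<le> snd p} - 1" using TV finP by simp
      also have "\<dots> \<le> 5" using card_pairs_le[of V'] cV' by (simp add: V'_def)
      finally show False using cL' by simp
    next
      case False
      then have c22: "card A = 2" "card A' = 2" using s4 cA cA' by (cases "card A = 0"; linarith)+
      obtain p q where pq: "A = {p,q}" "p \<noteq> q" using iffD1[OF card_2_iff c22(1)] by blast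
      obtain r s where rs: "A' = {r,s}" "r \<noteq> s" using iffD1[OF card_2_iff c22(2)] by blast
      have dist: "p \<noteq> r" "p \<noteq> s" "q \<noteq> r" "q \<noteq> s" using disjAA pq rs by auto
      have in6: "p \<in> {1..6}" "q \<in> {1..6}" "r \<in> {1..6}" "s \<in> {1..6}" using As pq rs by auto
      have W2: "\<And>a b c d. a \<noteq> b \<Longrightarrow> c \<noteq> d \<Longrightarrow> {a,b} \<inter> {c,d} = {} \<Longrightarrow> nrm (a,b) \<in> W \<Longrightarrow> nrm (c,d) \<in> W \<Longrightarrow> False"
      proof -
        fix a b c d :: nat
        assume h: "a \<noteq> b" "c \<noteq> d" "{a,b} \<inter> {c,d} = {}" "nrm (a,b) \<in> W" "nrm (c,d) \<in> W"
        have "fst (nrm (a,b)) \<noteq> snd (nrm (a,b))" "fst (nrm (c,d)) \<noteq> snd (nrm (c,d))"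
          using h nrm_double by auto
        then have "vals (nrm (a,b)) \<inter> vals (nrm (c,d)) \<noteq> {}" using Wf(1) h(4,5) by blast
        then show False using h(3) by (simp add: vals_nrm2)
      qed
      have o1: "nrm (p,r) \<in> BT \<or> nrm (q,s) \<in> BT"
        using cross[of p r] cross[of q s] pq rs W2[of p r q s] dist by auto
      have o2: "nrm (p,s) \<in> BT \<or> nrm (q,r) \<in> BT"
        using cross[of p s] cross[of q r] pq rs W2[of p s q r] dist by auto
      have m2': "\<And>y z1 z2. y \<in> {1..6} \<Longrightarrow> z1 \<in> {1..6} \<Longrightarrow> z2 \<in> {1..6} \<Longrightarrow> nrm (y,z1) \<in> BT \<Longrightarrow> nrm (y,z2) \<in> BT \<Longrightarrow> z1 = z2"
        using m2 by blast
      from o1 show False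
      proof
        assume pr: "nrm (p,r) \<in> BT"
        from o2 show False
        proof
          assume "nrm (p,s) \<in> BT" then show False using m2'[OF in6(1) in6(3) in6(4) pr] rs(2) by blast
        next
          assume qr: "nrm (q,r) \<in> BT"
          have "nrm (r,p) \<in> BT" "nrm (r,q) \<in> BT" using pr qr nrm_sym[of p r] nrm_sym[of q r] by simp_all
          then show False using m2'[OF in6(3) in6(1) in6(2)] pq(2) by blast
        qed
      next
        assume qs: "nrm (q,s) \<in> BT"
        from o2 show False
        proof
          assume ps: "nrm (p,s) \<in> BT"
          have "nrm (s,q) \<in> BT" "nrm (s,p) \<in> BT" using qs ps nrm_sym[of q s] nrm_sym[of p s] by simp_all
          then show False using m2'[OF in6(4) in6(2) in6(1)] pq(2) by blast
        next
          assume "nrm (q,r) \<in> BT" then show False using m2'[OF in6(2) in6(4) in6(3) qs] rs(2) by blast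
        qed
      qed
    qed
  qed
qed



definition ends :: "state \<Rightarrow> nat set" where
  "ends s = {left_end (snd s), right_end (snd s)}"

definition plc :: "state list \<Rightarrow> nat \<Rightarrow> bool" where
  "plc ss k \<longleftrightarrow> snd (ss ! Suc k) \<noteq> snd (ss ! k)"

lemma placed_changes: "placed s p t t' s' \<Longrightarrow> snd s' \<noteq> snd s"
  by (auto simp: placed_def)

lemma noplc:
  assumes "legal_game ss" "k < length ss - 1" "\<not> plc ss k"
  shows "ss ! Suc k = ss ! k \<and> snd (ss ! k) \<noteq> [] \<and> \<not> can_play (ss ! k) (player_of_turn k)"
proof -
  from step_cases[OF assms(1,2)] show ?thesis
  proof
    assume "\<exists>t t'. placed (ss ! k) (player_of_turn k) t t' (ss ! Suc k)"
    then obtain t t' where "placed (ss ! k) (player_of_turn k) t t' (ss ! Suc k)" by blast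
    from placed_changes[OF this] assms(3) show ?thesis by (simp add: plc_def)
  qed
qed

lemma yesplc:
  assumes "legal_game ss" "k < length ss - 1" "plc ss k"
  shows "\<exists>t t'. placed (ss ! k) (player_of_turn k) t t' (ss ! Suc k)"
proof -
  from step_cases[OF assms(1,2)] show ?thesis
  proof
    assume "ss ! Suc k = ss ! k \<and> snd (ss ! k) \<noteq> [] \<and> \<not> can_play (ss ! k) (player_of_turn k)"
    then show ?thesis using assms(3) by (simp add: plc_def)
  qed
qed

lemma placed_empty: "placed s p t t' s' \<Longrightarrow> snd s = [] \<Longrightarrow> ends s' = vals t' \<and> set (snd s') = {t'}"
  by (auto simp: placed_def ends_def vals_def left_end_def right_end_def)

lemma placed_ends:
  assumes "placed s p t t' s'" "snd s \<noteq> []"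
  shows "(left_end (snd s') = fst t' \<and> right_end (snd s') = right_end (snd s) \<and> snd t' = left_end (snd s)) \<or>
         (right_end (snd s') = snd t' \<and> left_end (snd s') = left_end (snd s) \<and> fst t' = right_end (snd s))"
  using assms by (auto simp: placed_def left_end_def right_end_def)

lemma placed_set:
  assumes "placed s p t t' s'" shows "set (snd s') = insert t' (set (snd s))"
  using assms by (auto simp: placed_def)

lemma board_ne:
  assumes lg: "legal_game ss" and j: "1 \<le> j" "j \<le> length ss - 1"
  shows "snd (ss ! j) \<noteq> []"
proof -
  have 0: "0 < length ss - 1" using j by simp
  have e: "snd (ss ! 0) = []" using lg by (simp add: legal_game_def)
  have "plc ss 0"
  proof (rule ccontr)
    assume "\<not> plc ss 0" then show False using noplc[OF lg 0] e by simp
  qed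
  then obtain t t' where "placed (ss ! 0) (player_of_turn 0) t t' (ss ! Suc 0)" using yesplc[OF lg 0] by blast
  then have "snd (ss ! 1) \<noteq> []" using step_board by simp
  then show ?thesis using game_mono[OF lg j] by blast
qed

lemma lacks_pass:
  assumes lg: "legal_game ss" and j: "j < length ss - 1" and np: "\<not> plc ss j"
  shows "\<forall>v\<in>ends (ss ! j). \<forall>t\<in>fst (ss ! (length ss - 1)) (player_of_turn j). v \<notin> vals t"
proof -
  have nc: "\<not> can_play (ss ! j) (player_of_turn j)" and ne: "snd (ss ! j) \<noteq> []" using noplc[OF lg j np] by auto
  have sub: "fst (ss ! (length ss - 1)) (player_of_turn j) \<subseteq> fst (ss ! j) (player_of_turn j)"
    using game_mono[OF lg, of j "length ss - 1"] j by simp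
  show ?thesis
  proof (intro ballI)
    fix v t assume v: "v \<in> ends (ss ! j)" and t: "t \<in> fst (ss ! (length ss - 1)) (player_of_turn j)"
    then have "t \<in> fst (ss ! j) (player_of_turn j)" using sub by blast
    then have "\<not> fits t (snd (ss ! j))" using nc unfolding can_play_def by blast
    then show "v \<notin> vals t" using v ne by (auto simp: fits_def ends_def vals_def)
  qed
qed

lemma lacks_final:
  assumes lg: "legal_game ss" and bl: "blocked (ss ! (length ss - 1))" and ne: "snd (ss ! (length ss - 1)) \<noteq> []"
    and q: "q \<in> players"
  shows "\<forall>v\<in>ends (ss ! (length ss - 1)). \<forall>t\<in>fst (ss ! (length ss - 1)) q. v \<notin> vals t"
proof (intro ballI)
  fix v t assume v: "v \<in> ends (ss ! (length ss - 1))" and t: "t \<in> fst (ss ! (length ss - 1)) q"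
  have "\<not> can_play (ss ! (length ss - 1)) q" using bl q by (simp add: blocked_def)
  then have "\<not> fits t (snd (ss ! (length ss - 1)))" using t unfolding can_play_def by blast
  then show "v \<notin> vals t" using v ne by (auto simp: fits_def ends_def vals_def)
qed

definition Upto :: "state list \<Rightarrow> nat \<Rightarrow> nat set" where
  "Upto ss j = (\<Union>i\<in>{i. i \<le> j \<and> snd (ss ! i) \<noteq> []}. ends (ss ! i))"

lemma Upto_mono: "Upto ss j \<subseteq> Upto ss (Suc j)"
  unfolding Upto_def by (intro UN_mono) auto

lemma Upto_in: "i \<le> j \<Longrightarrow> snd (ss ! i) \<noteq> [] \<Longrightarrow> ends (ss ! i) \<subseteq> Upto ss j"
  unfolding Upto_def by blast

lemma exposed:
  assumes lg: "legal_game ss" and j: "j \<le> length ss - 1"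
  shows "\<forall>e\<in>set (snd (ss ! j)). vals e \<subseteq> Upto ss j"
  using j
proof (induction j)
  case 0 then show ?case using lg by (simp add: legal_game_def)
next
  case (Suc j)
  then have j: "j < length ss - 1" by simp
  have IH: "\<forall>e\<in>set (snd (ss ! j)). vals e \<subseteq> Upto ss (Suc j)"
    using Suc.IH j Upto_mono[of ss j] by (meson Suc_leD Suc_leI order_trans)
  show ?case
  proof (cases "plc ss j")
    case False
    then show ?thesis using noplc[OF lg j] IH by simp
  next
    case True
    then obtain t t' where pl: "placed (ss ! j) (player_of_turn j) t t' (ss ! Suc j)" using yesplc[OF lg j] by blast
    have nes: "snd (ss ! Suc j) \<noteq> []" using step_board[OF pl] by simp
    have sj: "ends (ss ! Suc j) \<subseteq> Upto ss (Suc j)" using Upto_in[OF _ nes] by simp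
    have vt: "vals t' \<subseteq> Upto ss (Suc j)"
    proof (cases "snd (ss ! j) = []")
      case True then show ?thesis using placed_empty[OF pl] sj by simp
    next
      case False
      have sj': "ends (ss ! j) \<subseteq> Upto ss (Suc j)" using Upto_in[OF _ False] by simp
      have "vals t' \<subseteq> ends (ss ! Suc j) \<union> ends (ss ! j)"
        using placed_ends[OF pl False] by (auto simp: vals_def ends_def)
      then show ?thesis using sj sj' by blast
    qed
    have "set (snd (ss ! Suc j)) = insert t' (set (snd (ss ! j)))" using placed_set[OF pl] .
    then show ?thesis using IH vt by simp
  qed
qed



lemma Qlem:
  assumes lg: "legal_game ss" and nd: "n = length ss - 1" and bl: "blocked (ss ! n)"
    and Ls: "Ls \<subseteq> players" "q0 \<in> Ls"
    and alt: "\<forall>k. (player_of_turn (Suc k) \<in> Ls) = (player_of_turn k \<notin> Ls)"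
    and S: "S = {v. \<exists>q\<in>Ls. \<forall>t\<in>fst (ss ! n) q. v \<notin> vals t}"
    and K: "\<forall>k<n. player_of_turn k \<in> Ls \<longrightarrow> plc ss k \<longrightarrow> k \<in> K"
    and j: "1 \<le> j" "j \<le> n" "j \<notin> K" "j - 1 \<notin> K"
  shows "ends (ss ! j) \<subseteq> S"
proof -
  have ne: "snd (ss ! j) \<noteq> []" using board_ne[OF lg j(1)] j(2) nd by simp
  show ?thesis
  proof (cases "j = n")
    case True
    have "\<forall>v\<in>ends (ss ! n). \<forall>t\<in>fst (ss ! n) q0. v \<notin> vals t"
      using lacks_final[OF lg] bl ne True nd Ls by auto
    then show ?thesis using S Ls(2) True by blast
  next
    case False
    then have jn: "j < length ss - 1" using j nd by simp
    show ?thesis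
    proof (cases "player_of_turn j \<in> Ls")
      case True
      then have "\<not> plc ss j" using K j jn nd by auto
      then have "\<forall>v\<in>ends (ss ! j). \<forall>t\<in>fst (ss ! n) (player_of_turn j). v \<notin> vals t"
        using lacks_pass[OF lg jn] nd by simp
      then show ?thesis using S True by blast
    next
      case False
      have jj: "Suc (j - 1) = j" using j by simp
      have pL: "player_of_turn (j - 1) \<in> Ls" using alt[rule_format, of "j - 1"] jj False by simp
      have j1: "j - 1 < length ss - 1" using jn by simp
      have "\<not> plc ss (j - 1)" using K j j1 nd pL by auto
      then have eq: "ss ! j = ss ! (j - 1)" using noplc[OF lg j1] jj by simp
      have "\<forall>v\<in>ends (ss ! (j - 1)). \<forall>t\<in>fst (ss ! n) (player_of_turn (j - 1)). v \<notin> vals t"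
        using lacks_pass[OF lg j1 \<open>\<not> plc ss (j - 1)\<close>] nd by simp
      then show ?thesis using S pL eq by auto
    qed
  qed
qed

lemma claimA:
  assumes lg: "legal_game ss" and nd: "n = length ss - 1" and bl: "blocked (ss ! n)"
    and Ls: "Ls \<subseteq> players" "q0 \<in> Ls"
    and alt: "\<forall>k. (player_of_turn (Suc k) \<in> Ls) = (player_of_turn k \<notin> Ls)"
    and S: "S = {v. \<exists>q\<in>Ls. \<forall>t\<in>fst (ss ! n) q. v \<notin> vals t}"
    and K: "\<forall>k<n. player_of_turn k \<in> Ls \<longrightarrow> \<not> plc ss k"
  shows "\<forall>e\<in>set (snd (ss ! n)). vals e \<subseteq> S"
proof -
  have b0: "snd (ss ! 0) = []" using lg by (simp add: legal_game_def)
  have "Upto ss n \<subseteq> S"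
    unfolding Upto_def
  proof (intro UN_least)
    fix i assume i: "i \<in> {i. i \<le> n \<and> snd (ss ! i) \<noteq> []}"
    then have "1 \<le> i" using b0 by (cases i) auto
    then show "ends (ss ! i) \<subseteq> S" using Qlem[OF lg nd bl Ls alt S, of "{}" i] K i by auto
  qed
  then show ?thesis using exposed[OF lg, of n] nd by auto
qed

lemma claimB_aux:
  assumes ex: "\<forall>e\<in>set (snd (ss ! n)). vals e \<subseteq> Upto ss n"
    and good: "\<forall>i. 1 \<le> i \<longrightarrow> i \<le> n \<longrightarrow> i \<noteq> j0 \<longrightarrow> i \<noteq> Suc j0 \<longrightarrow> ends (ss ! i) \<subseteq> S"
    and b0: "snd (ss ! 0) = []"
    and e0: "snd (ss ! j0) \<noteq> [] \<longrightarrow> ends (ss ! j0) \<subseteq> S \<union> vals T"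
    and e1: "Suc j0 \<le> n \<longrightarrow> ends (ss ! Suc j0) \<subseteq> S \<union> vals T"
  shows "\<forall>e\<in>set (snd (ss ! n)). vals e \<subseteq> S \<union> vals T"
proof -
  have "Upto ss n \<subseteq> S \<union> vals T"
    unfolding Upto_def
  proof (intro UN_least)
    fix i assume i: "i \<in> {i. i \<le> n \<and> snd (ss ! i) \<noteq> []}"
    then have "1 \<le> i" using b0 by (cases i) auto
    then show "ends (ss ! i) \<subseteq> S \<union> vals T" using good e0 e1 i by (cases "i = j0 \<or> i = Suc j0") auto
  qed
  then show ?thesis using ex by blast
qed

lemma claimB:
  assumes lg: "legal_game ss" and nd: "n = length ss - 1" and bl: "blocked (ss ! n)"
    and nen: "snd (ss ! n) \<noteq> []"
    and Ls: "Ls \<subseteq> players" "q0 \<in> Ls"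
    and alt: "\<forall>k. (player_of_turn (Suc k) \<in> Ls) = (player_of_turn k \<notin> Ls)"
    and S: "S = {v. \<exists>q\<in>Ls. \<forall>t\<in>fst (ss ! n) q. v \<notin> vals t}"
    and K: "\<forall>k<n. player_of_turn k \<in> Ls \<longrightarrow> plc ss k \<longrightarrow> k = j0"
  shows "\<exists>T\<in>set (snd (ss ! n)). \<forall>e\<in>set (snd (ss ! n)). vals e \<subseteq> S \<union> vals T"
proof -
  have b0: "snd (ss ! 0) = []" using lg by (simp add: legal_game_def)
  have ex: "\<forall>e\<in>set (snd (ss ! n)). vals e \<subseteq> Upto ss n" using exposed[OF lg, of n] nd by simp
  have good: "\<forall>i. 1 \<le> i \<longrightarrow> i \<le> n \<longrightarrow> i \<noteq> j0 \<longrightarrow> i \<noteq> Suc j0 \<longrightarrow> ends (ss ! i) \<subseteq> S"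
  proof (intro allI impI)
    fix i assume i: "1 \<le> i" "i \<le> n" "i \<noteq> j0" "i \<noteq> Suc j0"
    have "i - 1 \<noteq> j0" using i by auto
    then show "ends (ss ! i) \<subseteq> S" using Qlem[OF lg nd bl Ls alt S, of "{j0}" i] K i by auto
  qed
  have hdn: "hd (snd (ss ! n)) \<in> set (snd (ss ! n))" using nen by simp
  have inN: "\<And>m x. m \<le> n \<Longrightarrow> x \<in> set (snd (ss ! m)) \<Longrightarrow> x \<in> set (snd (ss ! n))"
    using game_mono[OF lg] nd by blast
  show ?thesis
  proof (cases "j0 < n \<and> player_of_turn j0 \<in> Ls \<and> plc ss j0")
    case False
    then have K0: "\<forall>k<n. player_of_turn k \<in> Ls \<longrightarrow> \<not> plc ss k" using K by blast
    show ?thesis using claimA[OF lg nd bl Ls alt S K0] hdn by blast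
  next
    case True
    then have j0n: "j0 < length ss - 1" and pj: "plc ss j0" using nd by auto
    obtain tL tL' where pL: "placed (ss ! j0) (player_of_turn j0) tL tL' (ss ! Suc j0)"
      using yesplc[OF lg j0n pj] by blast
    have tLin: "tL' \<in> set (snd (ss ! n))" using step_board[OF pL] inN[of "Suc j0"] j0n nd by auto
    obtain Tp where Tp: "Tp \<in> set (snd (ss ! n))" "snd (ss ! j0) \<noteq> [] \<longrightarrow> ends (ss ! j0) \<subseteq> S \<union> vals Tp"
    proof (cases "snd (ss ! j0) = []")
      case True then show ?thesis using that hdn by blast
    next
      case ne0: False
      have "j0 \<noteq> 0"
      proof
        assume "j0 = 0" then show False using b0 ne0 by simp
      qed
      show ?thesis
      proof (cases "j0 = 1")
        case True
        have n0: "0 < length ss - 1" using j0n by simp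
        have "plc ss 0"
        proof (rule ccontr)
          assume "\<not> plc ss 0" then show False using noplc[OF lg n0] b0 by simp
        qed
        then obtain t t' where p0: "placed (ss ! 0) (player_of_turn 0) t t' (ss ! Suc 0)"
          using yesplc[OF lg n0] by blast
        have "ends (ss ! 1) = vals t'" using placed_empty[OF p0 b0] by simp
        moreover have "t' \<in> set (snd (ss ! n))" using step_board[OF p0] inN[of 1] n0 nd by auto
        ultimately show ?thesis using that True by blast
      next
        case False
        define i where "i = j0 - 1"
        have ii: "Suc i = j0" "1 \<le> i" "i \<le> n" "i \<noteq> j0" "i \<noteq> Suc j0" using \<open>j0 \<noteq> 0\<close> False j0n nd
          by (auto simp: i_def)
        have ei: "ends (ss ! i) \<subseteq> S" using good ii by blast
        have i_n: "i < length ss - 1" using ii j0n by simp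
        show ?thesis
        proof (cases "plc ss i")
          case False
          then have "ss ! j0 = ss ! i" using noplc[OF lg i_n] ii by simp
          then have "ends (ss ! j0) \<subseteq> S \<union> vals (hd (snd (ss ! n)))" using ei by auto
          then show ?thesis using that hdn by blast
        next
          case True
          then obtain t t' where pi: "placed (ss ! i) (player_of_turn i) t t' (ss ! Suc i)"
            using yesplc[OF lg i_n] by blast
          have nei: "snd (ss ! i) \<noteq> []" using board_ne[OF lg ii(2)] ii nd by simp
          have "ends (ss ! j0) \<subseteq> ends (ss ! i) \<union> vals t'"
            using placed_ends[OF pi nei] ii(1) by (auto simp: ends_def vals_def)
          moreover have "t' \<in> set (snd (ss ! n))" using step_board[OF pi] inN[of "Suc i"] ii j0n nd by auto
          ultimately show ?thesis using that ei by blast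
        qed
      qed
    qed
    show ?thesis
    proof (cases "snd (ss ! j0) = []")
      case True
      have "ends (ss ! Suc j0) = vals tL'" using placed_empty[OF pL True] by simp
      then show ?thesis using claimB_aux[OF ex good b0, of tL'] True tLin by blast
    next
      case ne0: False
      have E0: "ends (ss ! j0) \<subseteq> S \<union> vals Tp" using Tp ne0 by blast
      show ?thesis
      proof (cases "Suc j0 = n")
        case True
        have ne1: "snd (ss ! n) \<noteq> []" using nen .
        have "ends (ss ! n) \<subseteq> S"
          using lacks_final[OF lg] bl ne1 nd Ls S by fastforce
        then show ?thesis using claimB_aux[OF ex good b0, of Tp] E0 True Tp(1) by auto
      next
        case False
        then have j1n: "Suc j0 < length ss - 1" using j0n nd by simp
        have E2: "ends (ss ! Suc (Suc j0)) \<subseteq> S" using good j1n nd by auto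
        show ?thesis
        proof (cases "plc ss (Suc j0)")
          case False
          then have "ss ! Suc (Suc j0) = ss ! Suc j0" using noplc[OF lg j1n] by simp
          then have "ends (ss ! Suc j0) \<subseteq> S" using E2 by simp
          then show ?thesis using claimB_aux[OF ex good b0, of Tp] E0 Tp(1) by auto
        next
          case True
          then obtain t t' where pW: "placed (ss ! Suc j0) (player_of_turn (Suc j0)) t t' (ss ! Suc (Suc j0))"
            using yesplc[OF lg j1n] by blast
          have ne1: "snd (ss ! Suc j0) \<noteq> []" using step_board[OF pL] by simp
          have side: "left_end (snd (ss ! Suc j0)) \<in> S \<or> right_end (snd (ss ! Suc j0)) \<in> S"
            using placed_ends[OF pW ne1] E2 by (auto simp: ends_def)
          from placed_ends[OF pL ne0] show ?thesis
          proof
            assume pre: "left_end (snd (ss ! Suc j0)) = fst tL' \<and> right_end (snd (ss ! Suc j0)) = right_end (snd (ss ! j0)) \<and> snd tL' = left_end (snd (ss ! j0))"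
            from side show ?thesis
            proof
              assume "right_end (snd (ss ! Suc j0)) \<in> S"
              then have "ends (ss ! j0) \<subseteq> S \<union> vals tL'" "ends (ss ! Suc j0) \<subseteq> S \<union> vals tL'"
                using pre by (auto simp: ends_def vals_def)
              then show ?thesis using claimB_aux[OF ex good b0, of tL'] tLin by auto
            next
              assume "left_end (snd (ss ! Suc j0)) \<in> S"
              then have "ends (ss ! Suc j0) \<subseteq> S \<union> vals Tp"
                using pre E0 by (auto simp: ends_def)
              then show ?thesis using claimB_aux[OF ex good b0, of Tp] E0 Tp(1) by auto
            qed
          next
            assume app: "right_end (snd (ss ! Suc j0)) = snd tL' \<and> left_end (snd (ss ! Suc j0)) = left_end (snd (ss ! j0)) \<and> fst tL' = right_end (snd (ss ! j0))"
            from side show ?thesis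
            proof
              assume "left_end (snd (ss ! Suc j0)) \<in> S"
              then have "ends (ss ! j0) \<subseteq> S \<union> vals tL'" "ends (ss ! Suc j0) \<subseteq> S \<union> vals tL'"
                using app by (auto simp: ends_def vals_def)
              then show ?thesis using claimB_aux[OF ex good b0, of tL'] tLin by auto
            next
              assume "right_end (snd (ss ! Suc j0)) \<in> S"
              then have "ends (ss ! Suc j0) \<subseteq> S \<union> vals Tp"
                using app E0 by (auto simp: ends_def)
              then show ?thesis using claimB_aux[OF ex good b0, of Tp] E0 Tp(1) by auto
            qed
          qed
        qed
      qed
    qed
  qed
qed



lemma lp_tile:
  assumes lg: "legal_game ss" and k: "k < length ss - 1" and pk: "plc ss k"
  shows "\<exists>t. t \<in> fst (ss ! 0) (player_of_turn k) \<and> t \<in> fst (ss ! k) (player_of_turn k) \<and>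
             t \<in> nrm ` set (snd (ss ! Suc k))"
proof -
  obtain t t' where pl: "placed (ss ! k) (player_of_turn k) t t' (ss ! Suc k)" using yesplc[OF lg k pk] by blast
  have tk: "t \<in> fst (ss ! k) (player_of_turn k)" using pl by (simp add: placed_def)
  have t0: "t \<in> fst (ss ! 0) (player_of_turn k)" using tk game_mono[OF lg, of 0 k] k by auto
  have I: "Inv (ss ! k)" using game_Inv[OF lg] k by simp
  have "t \<in> all_tiles" using I tk pot_players by (auto simp: Inv_def)
  then have "nrm t' = t" using pl nrm_tile by (simp add: placed_def)
  moreover have "t' \<in> set (snd (ss ! Suc k))" using step_board[OF pl] by simp
  ultimately show ?thesis using tk t0 by blast
qed

lemma lp_count:
  assumes lg: "legal_game ss" and nd: "n = length ss - 1"
    and Ls: "Ls = {l1, l2}" "l1 \<in> players" "l2 \<in> players" "l1 \<noteq> l2"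
    and k1: "k1 < n" "player_of_turn k1 \<in> Ls" "plc ss k1"
  shows "card (fst (ss ! n) l1 \<union> fst (ss ! n) l2) \<le> 13"
    and "k2 < n \<Longrightarrow> player_of_turn k2 \<in> Ls \<Longrightarrow> plc ss k2 \<Longrightarrow> k1 < k2 \<Longrightarrow>
         card (fst (ss ! n) l1 \<union> fst (ss ! n) l2) \<le> 12"
proof -
  define X0 where "X0 = fst (ss ! 0) l1 \<union> fst (ss ! 0) l2"
  define Xn where "Xn = fst (ss ! n) l1 \<union> fst (ss ! n) l2"
  have deal: "is_deal (fst (ss ! 0))" using lg by (simp add: legal_game_def)
  have c0: "card X0 = 14"
  proof -
    have "card (fst (ss ! 0) l1) = 7" "card (fst (ss ! 0) l2) = 7"
      "fst (ss ! 0) l1 \<inter> fst (ss ! 0) l2 = {}" using deal Ls by (auto simp: is_deal_def)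
    moreover have "finite (fst (ss ! 0) l1)" "finite (fst (ss ! 0) l2)" using calculation(1,2)
      by (auto intro: card_ge_0_finite)
    ultimately show ?thesis by (simp add: X0_def card_Un_disjoint)
  qed
  have finX0: "finite X0" using c0 by (auto intro: card_ge_0_finite)
  have sub: "Xn \<subseteq> X0" using game_mono[OF lg, of 0 n] nd by (auto simp: Xn_def X0_def)
  have In: "Inv (ss ! n)" using game_Inv[OF lg] nd by simp
  have gone: "\<And>k t. k < n \<Longrightarrow> t \<in> nrm ` set (snd (ss ! Suc k)) \<Longrightarrow> t \<notin> Xn"
  proof -
    fix k t assume k: "k < n" and t: "t \<in> nrm ` set (snd (ss ! Suc k))"
    have "set (snd (ss ! Suc k)) \<subseteq> set (snd (ss ! n))" using game_mono[OF lg, of "Suc k" n] k nd by auto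
    then have "t \<in> nrm ` set (snd (ss ! n))" using t by blast
    moreover have "\<forall>p\<in>players. fst (ss ! n) p \<inter> nrm ` set (snd (ss ! n)) = {}" using In by (simp add: Inv_def)
    ultimately show "t \<notin> Xn" using Ls unfolding Xn_def by blast
  qed
  have inX0: "\<And>k t. player_of_turn k \<in> Ls \<Longrightarrow> t \<in> fst (ss ! 0) (player_of_turn k) \<Longrightarrow> t \<in> X0"
    using Ls by (auto simp: X0_def)
  obtain t1 where t1: "t1 \<in> fst (ss ! 0) (player_of_turn k1)" "t1 \<in> nrm ` set (snd (ss ! Suc k1))"
    using lp_tile[OF lg _ k1(3)] k1 nd by auto
  have t1X: "t1 \<in> X0" "t1 \<notin> Xn" using inX0[OF k1(2) t1(1)] gone[OF k1(1) t1(2)] by auto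
  have "Xn \<subseteq> X0 - {t1}" using sub t1X by blast
  then have "card Xn \<le> card (X0 - {t1})" using finX0 by (intro card_mono) auto
  also have "\<dots> = 13" using c0 t1X finX0 by simp
  finally show "card (fst (ss ! n) l1 \<union> fst (ss ! n) l2) \<le> 13" by (simp add: Xn_def)
  assume k2: "k2 < n" "player_of_turn k2 \<in> Ls" "plc ss k2" "k1 < k2"
  obtain t2 where t2: "t2 \<in> fst (ss ! 0) (player_of_turn k2)" "t2 \<in> fst (ss ! k2) (player_of_turn k2)"
    "t2 \<in> nrm ` set (snd (ss ! Suc k2))"
    using lp_tile[OF lg _ k2(3)] k2 nd by auto
  have t2X: "t2 \<in> X0" "t2 \<notin> Xn" using inX0[OF k2(2) t2(1)] gone[OF k2(1) t2(3)] by auto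
  have ne: "t1 \<noteq> t2"
  proof
    assume eq: "t1 = t2"
    have "set (snd (ss ! Suc k1)) \<subseteq> set (snd (ss ! k2))" using game_mono[OF lg, of "Suc k1" k2] k2 nd by auto
    then have tb: "t1 \<in> nrm ` set (snd (ss ! k2))" using t1(2) by blast
    have "Inv (ss ! k2)" using game_Inv[OF lg] k2 nd by simp
    then have "\<forall>p\<in>players. fst (ss ! k2) p \<inter> nrm ` set (snd (ss ! k2)) = {}"
      by (simp add: Inv_def)
    then show False using tb t2(2) eq pot_players[of k2] by blast
  qed
  have "Xn \<subseteq> X0 - {t1, t2}" using sub t1X t2X by blast
  then have "card Xn \<le> card (X0 - {t1, t2})" using finX0 by (intro card_mono) auto
  also have "\<dots> = 12" using c0 t1X t2X finX0 ne by (simp add: card_Diff_subset)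
  finally show "card (fst (ss ! n) l1 \<union> fst (ss ! n) l2) \<le> 12" by (simp add: Xn_def)
qed



lemma prelim:
  assumes tm: "tranca_minima ss"
  shows "legal_game ss" "last ss = ss ! (length ss - 1)" "Inv (fst (last ss), snd (last ss))"
    "snd (last ss) \<noteq> []" "blocked (last ss)"
    "left_end (snd (last ss)) = 0 \<and> right_end (snd (last ss)) = 0 \<and> card (nrm ` set (snd (last ss))) = 10 \<and>
         (\<forall>y\<le>6. (0,y) \<in> nrm ` set (snd (last ss))) \<and> (\<forall>y\<in>{1..6}. (\<Sum>t\<in>nrm ` set (snd (last ss)). occ y t) = 2)"
    "(\<Sum>t\<in>nrm ` set (snd (last ss)). pips t) = 42"
    "nrm ` set (snd (last ss)) \<subseteq> all_tiles"
    "\<forall>p\<in>players. fst (last ss) p \<subseteq> all_tiles"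
    "(\<Union>p\<in>players. fst (last ss) p) = all_tiles - nrm ` set (snd (last ss))"
    "\<forall>p\<in>players. \<forall>q\<in>players. p \<noteq> q \<longrightarrow> fst (last ss) p \<inter> fst (last ss) q = {}"
proof -
  show lg: "legal_game ss" using tm by (simp add: tranca_minima_def)
  then have ne: "ss \<noteq> []" by (simp add: legal_game_def)
  show la: "last ss = ss ! (length ss - 1)" using ne by (simp add: last_conv_nth)
  have I: "Inv (last ss)" using game_Inv[OF lg, of "length ss - 1"] la by simp
  then show I': "Inv (fst (last ss), snd (last ss))" by simp
  show Bne: "snd (last ss) \<noteq> []" using lg by (simp add: legal_game_def game_over_def)
  show bl: "blocked (last ss)" using tm by (simp add: tranca_minima_def ends_in_tranca_def)
  have blk: "\<forall>p\<in>players. \<forall>t\<in>fst (last ss) p. left_end (snd (last ss)) \<notin> vals t \<and> right_end (snd (last ss)) \<notin> vals t"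
  proof (intro ballI)
    fix p t assume p: "p \<in> players" and t: "t \<in> fst (last ss) p"
    have "\<not> can_play (last ss) p" using bl p by (simp add: blocked_def)
    then have "\<not> fits t (snd (last ss))" using t unfolding can_play_def by blast
    then show "left_end (snd (last ss)) \<notin> vals t \<and> right_end (snd (last ss)) \<notin> vals t"
      using Bne by (auto simp: fits_def vals_def)
  qed
  have bp: "(\<Sum>e\<leftarrow>snd (last ss). pips e) = 42" using tm by (simp add: tranca_minima_def board_pips_def)
  show "left_end (snd (last ss)) = 0 \<and> right_end (snd (last ss)) = 0 \<and> card (nrm ` set (snd (last ss))) = 10 \<and>
         (\<forall>y\<le>6. (0,y) \<in> nrm ` set (snd (last ss))) \<and> (\<forall>y\<in>{1..6}. (\<Sum>t\<in>nrm ` set (snd (last ss)). occ y t) = 2)"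
    by (rule final_static[OF I' Bne blk bp])
  have dist: "distinct (map nrm (snd (last ss)))" using I by (simp add: Inv_def)
  have 1: "(\<Sum>t\<in>nrm ` set (snd (last ss)). pips t) = sum_list (map pips (map nrm (snd (last ss))))"
    using sum_list_distinct_conv_sum_set[OF dist, of pips] by simp
  have 2: "map pips (map nrm (snd (last ss))) = map pips (snd (last ss))" by (simp add: pips_nrm)
  show "(\<Sum>t\<in>nrm ` set (snd (last ss)). pips t) = 42" using bp by (simp only: 1 2)
  show "nrm ` set (snd (last ss)) \<subseteq> all_tiles" using I by (auto simp: Inv_def)
  show "\<forall>p\<in>players. fst (last ss) p \<subseteq> all_tiles" using I by (simp add: Inv_def)
  have u: "(\<Union>p\<in>players. fst (last ss) p) \<union> nrm ` set (snd (last ss)) = all_tiles" using I by (simp add: Inv_def)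
  have d: "\<forall>p\<in>players. fst (last ss) p \<inter> nrm ` set (snd (last ss)) = {}" using I by (simp add: Inv_def)
  show "(\<Union>p\<in>players. fst (last ss) p) = all_tiles - nrm ` set (snd (last ss))" using u d by blast
  show "\<forall>p\<in>players. \<forall>q\<in>players. p \<noteq> q \<longrightarrow> fst (last ss) p \<inter> fst (last ss) q = {}"
    using I by (simp add: Inv_def)
qed

lemma sum4:
  assumes "finite A" "finite B" "finite C" "finite D"
    "A \<inter> B = {}" "A \<inter> C = {}" "A \<inter> D = {}" "B \<inter> C = {}" "B \<inter> D = {}" "C \<inter> D = {}"
  shows "(\<Sum>t\<in>A \<union> B \<union> C \<union> D. f t) = (\<Sum>t\<in>A. f t) + (\<Sum>t\<in>B. f t) + (\<Sum>t\<in>C. f t) + (\<Sum>t\<in>D. (f t :: nat))"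
proof -
  have "(\<Sum>t\<in>A \<union> B \<union> C \<union> D. f t) = (\<Sum>t\<in>A \<union> B \<union> C. f t) + (\<Sum>t\<in>D. f t)"
    using assms by (intro sum.union_disjoint) auto
  also have "(\<Sum>t\<in>A \<union> B \<union> C. f t) = (\<Sum>t\<in>A \<union> B. f t) + (\<Sum>t\<in>C. f t)"
    using assms by (intro sum.union_disjoint) auto
  also have "(\<Sum>t\<in>A \<union> B. f t) = (\<Sum>t\<in>A. f t) + (\<Sum>t\<in>B. f t)"
    using assms by (intro sum.union_disjoint) auto
  finally show ?thesis .
qed

lemma teams_partition:
  assumes tm: "tranca_minima ss" and pl: "players = {a, b, c, d}" "distinct [a, b, c, d]"
  shows "fst (last ss) a \<union> fst (last ss) b \<union> fst (last ss) c \<union> fst (last ss) d = all_tiles - nrm ` set (snd (last ss))"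
    and "hand_pips (last ss) a + hand_pips (last ss) b + hand_pips (last ss) c + hand_pips (last ss) d = 126"
    and "card (fst (last ss) a) + card (fst (last ss) b) + card (fst (last ss) c) + card (fst (last ss) d) = 18"
proof -
  let ?H = "fst (last ss)"
  let ?BT = "nrm ` set (snd (last ss))"
  have U: "(\<Union>p\<in>players. ?H p) = all_tiles - ?BT" using prelim(10)[OF tm] .
  then show P: "?H a \<union> ?H b \<union> ?H c \<union> ?H d = all_tiles - ?BT" using pl(1) by auto
  have D: "\<forall>p\<in>players. \<forall>q\<in>players. p \<noteq> q \<longrightarrow> ?H p \<inter> ?H q = {}" using prelim(11)[OF tm] .
  have sub: "\<forall>p\<in>players. ?H p \<subseteq> all_tiles" using prelim(9)[OF tm] .
  have fin0: "\<And>p. p \<in> players \<Longrightarrow> finite (?H p)"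
    using sub finite_subset[OF _ finite_all_tiles] by blast
  have fin: "finite (?H a)" "finite (?H b)" "finite (?H c)" "finite (?H d)"
    using fin0 pl(1) by auto
  have dj: "?H a \<inter> ?H b = {}" "?H a \<inter> ?H c = {}" "?H a \<inter> ?H d = {}" "?H b \<inter> ?H c = {}"
    "?H b \<inter> ?H d = {}" "?H c \<inter> ?H d = {}" using D pl by auto
  have BTs: "?BT \<subseteq> all_tiles" using prelim(8)[OF tm] .
  have "(\<Sum>t\<in>all_tiles. pips t) = (\<Sum>t\<in>?BT. pips t) + (\<Sum>t\<in>all_tiles - ?BT. pips t)"
    using sum.subset_diff[OF BTs finite_all_tiles, of pips] by simp
  then have "(\<Sum>t\<in>all_tiles - ?BT. pips t) = 126" using pips_all_tiles prelim(7)[OF tm] by simp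
  then show "hand_pips (last ss) a + hand_pips (last ss) b + hand_pips (last ss) c + hand_pips (last ss) d = 126"
    using sum4[OF fin dj, of pips] P by (simp add: hand_pips_def)
  have "card (all_tiles - ?BT) = 18" using card_Diff_subset[OF _ BTs] card_all_tiles prelim(6)[OF tm]
    finite_subset[OF BTs finite_all_tiles] by simp
  then show "card (?H a) + card (?H b) + card (?H c) + card (?H d) = 18"
    using P sum4[OF fin dj, of "\<lambda>_. 1"] by simp
qed



lemma main_generic:
  assumes tm: "tranca_minima ss"
    and pl: "players = {w1, w2, l1, l2}" "distinct [w1, w2, l1, l2]"
    and alt: "\<forall>k. (player_of_turn (Suc k) \<in> {l1,l2}) = (player_of_turn k \<notin> {l1,l2})"
    and W18: "hand_pips (last ss) w1 + hand_pips (last ss) w2 = 18"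
  shows False
proof -
  define n where "n = length ss - 1"
  have lg: "legal_game ss" using prelim(1)[OF tm] .
  have la: "last ss = ss ! n" using prelim(2)[OF tm] by (simp add: n_def)
  define H where "H = fst (last ss)"
  define B where "B = snd (last ss)"
  define BT where "BT = nrm ` set B"
  have st: "left_end B = 0 \<and> right_end B = 0 \<and> card BT = 10 \<and>
         (\<forall>y\<le>6. (0,y) \<in> BT) \<and> (\<forall>y\<in>{1..6}. (\<Sum>t\<in>BT. occ y t) = 2)"
    using prelim(6)[OF tm] by (simp add: B_def BT_def)
  have zero: "\<forall>y\<le>6. (0,y) \<in> BT" and o2: "\<forall>y\<in>{1..6}. (\<Sum>t\<in>BT. occ y t) = 2" and cBT: "card BT = 10"
    using st by auto
  have BTsub: "BT \<subseteq> all_tiles" using prelim(8)[OF tm] by (simp add: BT_def B_def)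
  have finBT: "finite BT" by (simp add: BT_def)
  note mt = matching[OF finBT BTsub zero o2]
  have m1: "\<forall>y\<in>{1..6}. \<exists>z\<in>{1..6}. z \<noteq> y \<and> nrm (y,z) \<in> BT" using mt(1) .
  have m2: "\<forall>y z1 z2. y \<in> {1..6} \<longrightarrow> z1 \<in> {1..6} \<longrightarrow> z2 \<in> {1..6} \<longrightarrow> nrm (y,z1) \<in> BT \<longrightarrow> nrm (y,z2) \<in> BT \<longrightarrow> z1 = z2"
    using mt(2) .
  have nz3: "card {t\<in>BT. fst t \<noteq> 0} = 3"
  proof -
    have Z: "{t\<in>BT. fst t = 0} = (\<lambda>y. (0,y)) ` {0..6}"
    proof
      show "{t\<in>BT. fst t = 0} \<subseteq> (\<lambda>y. (0,y)) ` {0..6}"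
      proof
        fix t assume t: "t \<in> {t\<in>BT. fst t = 0}"
        then have "t \<in> all_tiles" using BTsub by auto
        then have "snd t \<le> 6" by (auto simp: all_tiles_def)
        moreover have "t = (0, snd t)" using t by (simp add: prod_eq_iff)
        ultimately show "t \<in> (\<lambda>y. (0,y)) ` {0..6}" by (intro image_eqI[of _ _ "snd t"]) auto
      qed
      show "(\<lambda>y. (0,y)) ` {0..6} \<subseteq> {t\<in>BT. fst t = 0}" using zero by auto
    qed
    have cZ: "card {t\<in>BT. fst t = 0} = 7" unfolding Z by (subst card_image) (auto simp: inj_on_def)
    have "BT = {t\<in>BT. fst t = 0} \<union> {t\<in>BT. fst t \<noteq> 0}" by auto
    then have "card BT = card {t\<in>BT. fst t = 0} + card {t\<in>BT. fst t \<noteq> 0}"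
      using finBT by (metis (no_types, lifting) card_Un_disjoint disjoint_iff finite_Un mem_Collect_eq)
    then show ?thesis using cZ cBT by simp
  qed
  define W where "W = H w1 \<union> H w2"
  define L where "L = H l1"
  define L' where "L' = H l2"
  have part: "W \<union> L \<union> L' = all_tiles - BT"
    using teams_partition(1)[OF tm pl] by (auto simp: W_def L_def L'_def H_def BT_def B_def)
  have cards: "card (H w1) + card (H w2) + card (H l1) + card (H l2) = 18"
    using teams_partition(3)[OF tm pl] by (simp add: H_def)
  have D: "\<forall>p\<in>players. \<forall>q\<in>players. p \<noteq> q \<longrightarrow> H p \<inter> H q = {}" using prelim(11)[OF tm] by (simp add: H_def)
  have sub: "\<forall>p\<in>players. H p \<subseteq> all_tiles" using prelim(9)[OF tm] by (simp add: H_def)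
  have fin0: "\<And>p. p \<in> players \<Longrightarrow> finite (H p)" using sub finite_subset[OF _ finite_all_tiles] by blast
  have finH: "finite (H w1)" "finite (H w2)" "finite (H l1)" "finite (H l2)" using fin0 pl(1) by auto
  have dW: "H w1 \<inter> H w2 = {}" "H l1 \<inter> H l2 = {}" using D pl by auto
  have cW: "card W = card (H w1) + card (H w2)" using card_Un_disjoint[OF finH(1,2) dW(1)] by (simp add: W_def)
  have pW: "(\<Sum>t\<in>W. pips t) = 18" using W18 sum.union_disjoint[OF finH(1,2) dW(1), of pips]
    by (simp add: W_def hand_pips_def H_def)
  have WO: "W \<subseteq> all_tiles - BT" "L \<subseteq> all_tiles - BT" "L' \<subseteq> all_tiles - BT" using part by auto
  have Wnz: "\<forall>t\<in>W. fst t \<noteq> 0"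
  proof
    fix t assume t: "t \<in> W"
    show "fst t \<noteq> 0"
    proof
      assume f: "fst t = 0"
      have "t \<in> all_tiles" "t \<notin> BT" using t WO by auto
      then have "snd t \<le> 6" "t = (0, snd t)" using f by (auto simp: all_tiles_def prod_eq_iff)
      then show False using zero \<open>t \<notin> BT\<close> by metis
    qed
  qed
  have Wall: "W \<subseteq> all_tiles" using WO by auto
  have W5: "card W \<le> 5" using W_small(1)[OF Wall Wnz pW] .
  have deal: "is_deal (fst (ss ! 0))" using lg by (simp add: legal_game_def)
  have c7: "\<And>p. p \<in> players \<Longrightarrow> card (H p) \<le> 7"
  proof -
    fix p assume p: "p \<in> players"
    have "H p \<subseteq> fst (ss ! 0) p" using game_mono[OF lg, of 0 n] la by (simp add: H_def n_def)
    moreover have "card (fst (ss ! 0) p) = 7" "finite (fst (ss ! 0) p)" using deal p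
      by (auto simp: is_deal_def intro: card_ge_0_finite)
    ultimately show "card (H p) \<le> 7" by (metis card_mono)
  qed
  have cL: "card L \<le> 7" "card L' \<le> 7" using c7 pl(1) by (auto simp: L_def L'_def)
  have cLL: "card (L \<union> L') = card L + card L'" using card_Un_disjoint[OF finH(3,4) dW(2)] by (simp add: L_def L'_def)
  define Ls where "Ls = {l1, l2}"
  have Lsp: "Ls \<subseteq> players" "l1 \<in> Ls" using pl by (auto simp: Ls_def)
  have alt': "\<forall>k. (player_of_turn (Suc k) \<in> Ls) = (player_of_turn k \<notin> Ls)" using alt by (simp add: Ls_def)
  define S where "S = {v. \<exists>q\<in>Ls. \<forall>t\<in>fst (ss ! n) q. v \<notin> vals t}"
  have bln: "blocked (ss ! n)" using prelim(5)[OF tm] la by simp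
  have nen: "snd (ss ! n) \<noteq> []" using prelim(4)[OF tm] la by simp
  have Slack: "\<And>v. v \<in> {1..6} \<Longrightarrow> v \<in> S \<longleftrightarrow> v \<in> lack L \<union> lack L'"
    by (auto simp: S_def Ls_def lack_def L_def L'_def H_def la)
  have appear: "\<And>v. v \<in> {1..6} \<Longrightarrow> \<exists>e\<in>set (snd (ss ! n)). v \<in> vals e"
  proof -
    fix v :: nat assume v: "v \<in> {1..6}"
    then have "(0,v) \<in> BT" using zero by auto
    then obtain e where e: "e \<in> set B" "nrm e = (0,v)" by (auto simp: BT_def)
    have "vals e = {0,v}" using vals_nrm[of e] e(2) by (simp add: vals_def)
    then show "\<exists>e\<in>set (snd (ss ! n)). v \<in> vals e" using e(1) la by (auto simp: B_def)
  qed
  have lpc: "l1 \<in> players" "l2 \<in> players" "l1 \<noteq> l2" using pl by auto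
  have cardsum: "card W + card L + card L' = 18" using cards cW by (simp add: L_def L'_def)
  show False
  proof (cases "card W = 5")
    case False
    then have cW4: "card W = 4" using W5 cardsum cL by linarith
    then have c77: "card L = 7" "card L' = 7" using cardsum cL by linarith+
    have noLP: "\<forall>k<n. player_of_turn k \<in> Ls \<longrightarrow> \<not> plc ss k"
    proof (intro allI impI notI)
      fix k assume k: "k < n" "player_of_turn k \<in> Ls" "plc ss k"
      have "card (fst (ss ! n) l1 \<union> fst (ss ! n) l2) \<le> 13"
        using lp_count(1)[OF lg n_def Ls_def lpc k] .
      then show False using cLL c77 by (simp add: L_def L'_def H_def la)
    qed
    have all: "\<forall>e\<in>set (snd (ss ! n)). vals e \<subseteq> S" using claimA[OF lg n_def bln Lsp alt' S_def noLP] .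
    have "\<forall>v\<in>{1..6}. v \<in> lack L \<union> lack L'"
    proof
      fix v :: nat assume v: "v \<in> {1..6}"
      obtain e where "e \<in> set (snd (ss ! n))" "v \<in> vals e" using appear[OF v] by blast
      then have "v \<in> S" using all by blast
      then show "v \<in> lack L \<union> lack L'" using Slack[OF v] by simp
    qed
    then show False using finish4[OF WO(2,3) zero c77] by simp
  next
    case True
    obtain x where Wc: "W = {(1,1),(1,2),(1,3),(2,2),x}" "x = (1,4) \<or> x = (2,3)"
      using W_small(2)[OF Wall Wnz pW True] by blast
    have c13: "card L + card L' = 13" using cardsum True by simp
    define j0 where "j0 = (SOME k. k < n \<and> player_of_turn k \<in> Ls \<and> plc ss k)"
    have K: "\<forall>k<n. player_of_turn k \<in> Ls \<longrightarrow> plc ss k \<longrightarrow> k = j0"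
    proof (intro allI impI)
      fix k assume k: "k < n" "player_of_turn k \<in> Ls" "plc ss k"
      then have j: "j0 < n" "player_of_turn j0 \<in> Ls" "plc ss j0"
        using someI[of "\<lambda>k. k < n \<and> player_of_turn k \<in> Ls \<and> plc ss k" k] by (auto simp: j0_def)
      show "k = j0"
      proof (rule ccontr)
        assume "k \<noteq> j0"
        then have "k < j0 \<or> j0 < k" by linarith
        then have "card (fst (ss ! n) l1 \<union> fst (ss ! n) l2) \<le> 12"
        proof
          assume "k < j0" then show ?thesis using lp_count(2)[OF lg n_def Ls_def lpc k j] by blast
        next
          assume "j0 < k" then show ?thesis using lp_count(2)[OF lg n_def Ls_def lpc j k] by blast
        qed
        then show False using cLL c13 by (simp add: L_def L'_def H_def la)
      qed
    qed
    obtain T where T: "T \<in> set (snd (ss ! n))" "\<forall>e\<in>set (snd (ss ! n)). vals e \<subseteq> S \<union> vals T"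
      using claimB[OF lg n_def bln nen Lsp alt' S_def K] by blast
    have TBT: "nrm T \<in> BT" using T(1) la by (simp add: BT_def B_def)
    have U: "\<forall>v\<in>{1..6}. v \<notin> lack L \<union> lack L' \<longrightarrow> v \<in> vals (nrm T)"
    proof (intro ballI impI)
      fix v :: nat assume v: "v \<in> {1..6}" "v \<notin> lack L \<union> lack L'"
      obtain e where "e \<in> set (snd (ss ! n))" "v \<in> vals e" using appear[OF v(1)] by blast
      then have "v \<in> S \<union> vals T" using T(2) by blast
      moreover have "v \<notin> S" using Slack[OF v(1)] v(2) by simp
      ultimately show "v \<in> vals (nrm T)" by (simp add: vals_nrm)
    qed
    have "card L = 7 \<and> card L' = 6 \<or> card L = 6 \<and> card L' = 7" using c13 cL by linarith
    then show False
    proof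
      assume "card L = 7 \<and> card L' = 6"
      then show False using finish5[OF BTsub zero m1 m2 nz3 part Wc] U TBT by blast
    next
      assume c: "card L = 6 \<and> card L' = 7"
      have part': "W \<union> L' \<union> L = all_tiles - BT" using part by auto
      have U': "\<exists>T\<in>BT. \<forall>v\<in>{1..6}. v \<notin> lack L' \<union> lack L \<longrightarrow> v \<in> vals T" using U TBT by blast
      show False using finish5[OF BTsub zero m1 m2 nz3 part' Wc] U' c by blast
    qed
  qed
qed



lemma pot_24: "(player_of_turn k \<in> {2,4}) = odd k"
  by (simp add: player_of_turn_def) presburger

lemma pot_13: "(player_of_turn k \<in> {1,3}) = even k"
  by (simp add: player_of_turn_def) presburger

theorem mainTheorem9:
  shows "\<not> (\<exists>ss. tranca_minima ss \<and> winner_obtains (last ss) 108)"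
proof
  assume "\<exists>ss. tranca_minima ss \<and> winner_obtains (last ss) 108"
  then obtain ss where tm: "tranca_minima ss" and wo: "winner_obtains (last ss) 108" by blast
  have pl1: "players = {1, 3, 2, 4}" by (auto simp: players_def)
  have tot: "hand_pips (last ss) 1 + hand_pips (last ss) 3 + hand_pips (last ss) 2 + hand_pips (last ss) 4 = 126"
    using teams_partition(2)[OF tm pl1] by simp
  from wo show False unfolding winner_obtains_def team13_pips_def team24_pips_def
  proof
    assume "hand_pips (last ss) 1 + hand_pips (last ss) 3 < hand_pips (last ss) 2 + hand_pips (last ss) 4 \<and>
       hand_pips (last ss) 2 + hand_pips (last ss) 4 = 108"
    then have "hand_pips (last ss) 1 + hand_pips (last ss) 3 = 18" using tot by linarith
    moreover have "\<forall>k. (player_of_turn (Suc k) \<in> {2,4}) = (player_of_turn k \<notin> {2,4})"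
      by (simp only: pot_24) simp
    ultimately show False using main_generic[OF tm pl1] by simp
  next
    assume "hand_pips (last ss) 2 + hand_pips (last ss) 4 < hand_pips (last ss) 1 + hand_pips (last ss) 3 \<and>
       hand_pips (last ss) 1 + hand_pips (last ss) 3 = 108"
    then have "hand_pips (last ss) 2 + hand_pips (last ss) 4 = 18" using tot by linarith
    moreover have pl2: "players = {2, 4, 1, 3}" by (auto simp: players_def)
    moreover have "\<forall>k. (player_of_turn (Suc k) \<in> {1,3}) = (player_of_turn k \<notin> {1,3})"
      by (simp only: pot_13) simp
    ultimately show False using main_generic[OF tm pl2] by simp
  qed
qed


end
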